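(* Assume the standing assumptions in the context, and let $f\in AC([T,x_0))$. Then $$\Big(\frac{f(x)}{\phi_2(x)}\Big)'=\Big(\frac{\phi_1(x)}{\phi_2(x)}\Big)'f_1^*(x)$$ at every $x\in I$ where $f$ is differentiable. (I) For a real number $a_1$ the following are equivalent: (i) $\lim_{x\to x_0}f_1^*(x)=a_1$; (ii) $\big(f(x)/\phi_2(x)\big)'=a_1\big(\phi_1(x)/\phi_2(x)\big)'+o\big((\phi_1(x)/\phi_2(x))'\big)$ as $x\to x_0$; (iii) as $x\to x_0$ both $f(x)=a_1\phi_1(x)+o(\phi_1(x))$ and $\big(f(x)/\phi_2(x)\big)'=a_1\big(\phi_1(x)/\phi_2(x)\big)'+o\big((\phi_1(x)/\phi_2(x))'\big)$. (II) For a real number $a_1$, the pair of conditions $$\lim_{x\to x_0}f_1^*(x)=a_1,\qquad \int_T^{x_0}\Big(\frac{\phi_1(t)}{\phi_2(t)}\Big)'[f_1^*(t)-a_1]\,dt\ \text{ convergent}$$ holds if and only if there is a real number $a_2$ such that, as $x\to x_0$, $$f(x)=a_1\phi_1(x)+a_2\phi_2(x)+o(\phi_2(x)),\qquad \Big(\frac{f(x)}{\phi_2(x)}\Big)'=a_1\Big(\frac{\phi_1(x)}{\phi_2(x)}\Big)'+o\Big(\Big(\frac{\phi_1(x)}{\phi_2(x)}\Big)'\Big).$$ In this case $$f(x)=a_1\phi_1(x)+a_2\phi_2(x)-\phi_2(x)\int_x^{x_0}\Big(\frac{\phi_1(t)}{\phi_2(t)}\Big)'[f_1^*(t)-a_1]\,dt,\qquad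 x\in[T,x_0).$$
   Context: Let $x_0\in\mathbb{R}\cup\{+\infty\}$, $T\in\mathbb{R}$ with $T<x_0$, and $I:=[T,x_0)$. All limits and asymptotic relations "as $x\to x_0$" are taken for $x\in I$; for functions defined only almost everywhere, over the points where they are defined. For differentiable $g,h$ put $W(g,h;x):=g(x)h'(x)-g'(x)h(x)$. Standing assumptions: $\phi_1,\phi_2\in C^1(I)$; $\phi_2(x)=o(\phi_1(x))$ as $x\to x_0$; $\phi_1(x)\ne0$, $\phi_2(x)\ne0$ for all $x\in I$; $W(x):=W(\phi_1,\phi_2;x)\ne0$ for all $x\in I$. $AC([T,x_0))$ denotes functions absolutely continuous on every compact subinterval of $I$. For such $f$ and every $t\in I$ where $f$ is differentiable define $f_1^*(t):=W(f,\phi_2;t)/W(t)$. *)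

theory Defs
  imports "HOL-Analysis.Analysis" "HOL-Library.Landau_Symbols"
begin

definition ivl :: "real \<Rightarrow> ereal \<Rightarrow> real set" where
  "ivl T x0 = {x. T \<le> x \<and> ereal x < x0}"

definition to_x0 :: "ereal \<Rightarrow> real filter" where
  "to_x0 x0 = (if x0 = PInfty then at_top else at_left (real_of_ereal x0))"

text \<open>Derivative relative to the interval I (one-sided at the endpoint T).\<close>
definition dI :: "real set \<Rightarrow> (real \<Rightarrow> real) \<Rightarrow> real \<Rightarrow> real" where
  "dI I g x = vector_derivative g (at x within I)"

definition Wr :: "real set \<Rightarrow> (real \<Rightarrow> real) \<Rightarrow> (real \<Rightarrow> real) \<Rightarrow> real \<Rightarrow> real" where
  "Wr I g h x = g x * dI I h x - dI I g x * h x"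

text \<open>Absolute continuity on a compact interval [c,d] (classical definition via
  finite families of non-overlapping subintervals, listed in increasing order).\<close>
definition abs_cont_on :: "(real \<Rightarrow> real) \<Rightarrow> real \<Rightarrow> real \<Rightarrow> bool" where
  "abs_cont_on f c d \<longleftrightarrow>
     (\<forall>\<epsilon>>0. \<exists>\<delta>>0. \<forall>(n::nat) (a::nat \<Rightarrow> real) (b::nat \<Rightarrow> real).
        (\<forall>k<n. c \<le> a k \<and> a k \<le> b k \<and> b k \<le> d) \<and>
        (\<forall>k. Suc k < n \<longrightarrow> b k \<le> a (Suc k)) \<and>
        (\<Sum>k<n. b k - a k) < \<delta> \<longrightarrow> (\<Sum>k<n. \<bar>f (b k) - f (a k)\<bar>) < \<epsilon>)"

definition AC_loc :: "real \<Rightarrow> ereal \<Rightarrow> (real \<Rightarrow> real) \<Rightarrow> bool" where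
  "AC_loc T x0 f \<longleftrightarrow> (\<forall>c d. c \<in> ivl T x0 \<longrightarrow> d \<in> ivl T x0 \<longrightarrow> c \<le> d \<longrightarrow> abs_cont_on f c d)"

definition imp_conv :: "ereal \<Rightarrow> real \<Rightarrow> (real \<Rightarrow> real) \<Rightarrow> bool" where
  "imp_conv x0 a h \<longleftrightarrow> (\<forall>y. a \<le> y \<and> ereal y < x0 \<longrightarrow> h integrable_on {a..y})
      \<and> (\<exists>L. ((\<lambda>y. integral {a..y} h) \<longlongrightarrow> L) (to_x0 x0))"

definition imp_int :: "ereal \<Rightarrow> real \<Rightarrow> (real \<Rightarrow> real) \<Rightarrow> real" where
  "imp_int x0 a h = Lim (to_x0 x0) (\<lambda>y. integral {a..y} h)"

end

theory Submission
  imports Defs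
begin

fun psum :: "(real \<Rightarrow> real) \<Rightarrow> real list \<Rightarrow> real" where
  "psum f (a # b # xs) = max 0 (f b - f a) + psum f (b # xs)"
| "psum f _ = 0"

fun asum :: "(real \<Rightarrow> real) \<Rightarrow> real list \<Rightarrow> real" where
  "asum f (a # b # xs) = \<bar>f b - f a\<bar> + asum f (b # xs)"
| "asum f _ = 0"

lemma psum_le_asum: "psum f L \<le> asum f L"
  by (induction f L rule: psum.induct) auto

lemma psum_nonneg: "0 \<le> psum f L"
  by (induction f L rule: psum.induct) auto

lemma psum_append: "psum f (xs @ y # ys) = psum f (xs @ [y]) + psum f (y # ys)"
proof (induction xs)
  case Nil then show ?case by simp
next
  case (Cons a xs)
  then show ?case by (cases xs) auto
qed

lemma psum_snoc: "psum f (xs @ [a, b]) = psum f (xs @ [a]) + max 0 (f b - f a)"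
  using psum_append[of f xs a "[b]"] by simp

lemma psum_split:
  assumes "xs \<noteq> []" "ys \<noteq> []"
  shows "psum f (xs @ ys) \<le> psum f (xs @ [m]) + psum f (m # ys)"
proof -
  obtain xs' l where xs: "xs = xs' @ [l]" using assms(1) by (metis rev_exhaust)
  obtain h ys' where ys: "ys = h # ys'" using assms(2) by (cases ys) auto
  have 1: "psum f (xs @ ys) = psum f (xs' @ [l, h]) + psum f (h # ys')"
    using psum_append[of f "xs' @ [l]" h ys'] by (simp add: xs ys)
  have 2: "psum f (xs @ [m]) = psum f (xs' @ [l]) + max 0 (f m - f l)"
    using psum_snoc[of f xs' l m] by (simp add: xs)
  have 3: "psum f (m # ys) = max 0 (f h - f m) + psum f (h # ys')"
    by (simp add: ys)
  have 4: "psum f (xs' @ [l, h]) = psum f (xs' @ [l]) + max 0 (f h - f l)"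
    by (rule psum_snoc)
  show ?thesis unfolding 1 2 3 4 by linarith
qed

lemma asum_nth: "asum f L = (\<Sum>k<length L - 1. \<bar>f (L ! Suc k) - f (L ! k)\<bar>)"
proof (induction f L rule: asum.induct)
  case (1 f a b xs)
  have "length (a # b # xs) - 1 = Suc (length (b # xs) - 1)" by simp
  then show ?case using 1
    by (simp only: sum.lessThan_Suc_shift) simp
qed auto

lemma tele_nth:
  fixes L :: "real list"
  assumes "L \<noteq> []"
  shows "(\<Sum>k<length L - 1. L ! Suc k - L ! k) = last L - hd L"
  using assms
proof (induction L)
  case (Cons a L)
  show ?case
  proof (cases L)
    case Nil then show ?thesis by simp
  next
    case (Cons b L')
    have "length (a # L) - 1 = Suc (length L - 1)" using Cons by simp
    then have "(\<Sum>k<length (a # L) - 1. (a # L) ! Suc k - (a # L) ! k)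
        = (L ! 0 - a) + (\<Sum>k<length L - 1. L ! Suc k - L ! k)"
      by (simp only: sum.lessThan_Suc_shift) simp
    then show ?thesis using Cons.IH Cons by simp
  qed
qed simp

lemma sorted_nth_le: "sorted L \<Longrightarrow> Suc k < length L \<Longrightarrow> L ! k \<le> L ! Suc k"
  by (simp add: sorted_iff_nth_mono)

lemma AC_list:
  assumes AC: "abs_cont_on f c d" and e: "e > 0"
  obtains \<delta> where "\<delta> > 0" "\<And>L. sorted L \<Longrightarrow> L \<noteq> [] \<Longrightarrow> set L \<subseteq> {c..d}
       \<Longrightarrow> last L - hd L < \<delta> \<Longrightarrow> asum f L < e"
proof -
  obtain \<delta> where d: "\<delta> > 0" and H0: "\<forall>(n::nat) a b. (\<forall>k<n. c \<le> a k \<and> a k \<le> b k \<and> b k \<le> d) \<and>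
        (\<forall>k. Suc k < n \<longrightarrow> b k \<le> a (Suc k)) \<and>
        (\<Sum>k<n. b k - a k) < \<delta> \<longrightarrow> (\<Sum>k<n. \<bar>f (b k) - f (a k)\<bar>) < e"
    using AC e unfolding abs_cont_on_def by blast
  note H = H0[rule_format]
  show ?thesis
  proof (rule that[OF d])
    fix L :: "real list" assume L: "sorted L" "L \<noteq> []" "set L \<subseteq> {c..d}" "last L - hd L < \<delta>"
    let ?n = "length L - 1"
    have P1: "\<forall>k<?n. c \<le> L ! k \<and> L ! k \<le> L ! Suc k \<and> L ! Suc k \<le> d"
    proof (intro allI impI)
      fix k assume k: "k < ?n"
      then have m1: "L ! k \<in> set L" and m2: "L ! Suc k \<in> set L" by auto
      have "c \<le> L ! k" "L ! Suc k \<le> d" using subsetD[OF L(3) m1] subsetD[OF L(3) m2] by auto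
      moreover have "L ! k \<le> L ! Suc k" using sorted_nth_le[OF L(1)] k by simp
      ultimately show "c \<le> L ! k \<and> L ! k \<le> L ! Suc k \<and> L ! Suc k \<le> d" by simp
    qed
    have P2: "\<forall>k. Suc k < ?n \<longrightarrow> L ! Suc k \<le> L ! Suc k" by simp
    have P3: "(\<Sum>k<?n. L ! Suc k - L ! k) < \<delta>" using tele_nth[OF L(2)] L(4) by simp
    have "(\<Sum>k<?n. \<bar>f (L ! Suc k) - f (L ! k)\<bar>) < e"
      using H[of ?n "\<lambda>k. L ! k" "\<lambda>k. L ! Suc k"] P1 P2 P3 by blast
    then show "asum f L < e" by (simp add: asum_nth)
  qed
qed

definition parts :: "real \<Rightarrow> real \<Rightarrow> real list set" where
  "parts c x = {L. sorted L \<and> L \<noteq> [] \<and> hd L = c \<and> last L = x}"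

lemma parts_set: "L \<in> parts c x \<Longrightarrow> set L \<subseteq> {c..x}"
proof
  fix t assume L: "L \<in> parts c x" and t: "t \<in> set L"
  from L have s: "sorted L" "L \<noteq> []" "hd L = c" "last L = x" by (auto simp: parts_def)
  obtain i where i: "i < length L" "t = L ! i" using t by (metis in_set_conv_nth)
  have "L ! 0 \<le> L ! i" "L ! i \<le> L ! (length L - 1)"
    using s(1) i(1) by (auto simp: sorted_iff_nth_mono)
  then show "t \<in> {c..x}" using s i by (simp add: hd_conv_nth last_conv_nth)
qed

lemma parts_split:
  assumes L: "L \<in> parts c x" and m: "c \<le> m" "m \<le> x"
  shows "\<exists>A B. A \<in> parts c m \<and> B \<in> parts m x \<and> psum f L \<le> psum f A + psum f B"
proof -
  let ?A = "takeWhile (\<lambda>t. t \<le> m) L" and ?B = "dropWhile (\<lambda>t. t \<le> m) L"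
  from L have s: "sorted L" "L \<noteq> []" "hd L = c" "last L = x" by (auto simp: parts_def)
  have LAB: "L = ?A @ ?B" by simp
  have Ane: "?A \<noteq> []" using s m by (cases L) auto
  have Ahd: "hd ?A = c" using s m by (cases L) auto
  have sA: "sorted ?A" using s(1) by (metis LAB sorted_append)
  have sB: "sorted ?B" using s(1) by (metis LAB sorted_append)
  have Ale: "\<forall>t\<in>set ?A. t \<le> m" by (meson set_takeWhileD)
  have Bge: "\<forall>t\<in>set ?B. m < t"
  proof
    fix t assume t: "t \<in> set ?B"
    then have "?B \<noteq> []" by (metis empty_iff list.set(1))
    then have "\<not> hd ?B \<le> m" by (metis hd_dropWhile)
    moreover have "hd ?B \<le> t" using sB t by (metis list.sel(1) list.set_cases sorted_simps(2) order.refl)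
    ultimately show "m < t" by simp
  qed
  show ?thesis
  proof (cases "?B = []")
    case True
    then have "L = ?A" by (metis LAB append_Nil2)
    then have "x \<le> m" using Ale s Ane by (metis last_in_set)
    then have xm: "x = m" using m by simp
    have "?A @ [m] \<in> parts c m"
      unfolding parts_def using sA Ale Ahd Ane by (auto simp: sorted_append)
    moreover have "[m] \<in> parts m x" using xm by (simp add: parts_def)
    moreover have "psum f L \<le> psum f (?A @ [m]) + psum f [m]"
    proof -
      obtain A' l where "?A = A' @ [l]" using Ane by (metis rev_exhaust)
      then show ?thesis using psum_snoc[of f A' l m] \<open>L = ?A\<close> by simp
    qed
    ultimately show ?thesis by blast
  next
    case False
    have "?A @ [m] \<in> parts c m"
      unfolding parts_def using sA Ale Ahd Ane by (auto simp: sorted_append)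
    moreover have "m # ?B \<in> parts m x"
    proof -
      have "sorted (m # ?B)" using sB Bge by (auto simp: less_imp_le)
      moreover have "last ?B = last L" using False by (metis LAB last_appendR)
      moreover have "last (m # ?B) = last ?B" by (rule last_ConsR[OF False])
      ultimately have "last (m # ?B) = x" using s(4) by simp
      with \<open>sorted (m # ?B)\<close> show ?thesis unfolding parts_def by simp
    qed
    moreover have "psum f L \<le> psum f (?A @ [m]) + psum f (m # ?B)"
      using psum_split[OF Ane False, of f m] LAB by simp
    ultimately show ?thesis by blast
  qed
qed

lemma parts_bounded:
  assumes AC: "abs_cont_on f c d"
  shows "\<exists>M. \<forall>x\<in>{c..d}. \<forall>L\<in>parts c x. psum f L \<le> M"
proof -
  obtain \<delta> where d: "\<delta> > 0" and H: "\<And>L. sorted L \<Longrightarrow> L \<noteq> [] \<Longrightarrow> set L \<subseteq> {c..d}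
       \<Longrightarrow> last L - hd L < \<delta> \<Longrightarrow> asum f L < 1"
    using AC_list[OF AC, of 1] by auto
  have claim: "\<forall>x\<in>{c..d}. x \<le> c + real k * \<delta>/2 \<longrightarrow> (\<forall>L\<in>parts c x. psum f L \<le> real k)" for k
  proof (induction k)
    case 0
    show ?case
    proof (intro ballI impI)
      fix x L assume x: "x \<in> {c..d}" "x \<le> c + real 0 * \<delta> / 2" and L: "L \<in> parts c x"
      then have xc: "x = c" by simp
      have "set L \<subseteq> {c}" using parts_set[OF L] xc by auto
      then have "psum f L = 0"
      proof (induction f L rule: psum.induct)
        case (1 f a b xs) then show ?case by simp
      qed auto
      then show "psum f L \<le> real 0" by simp
    qed
  next
    case (Suc k)
    show ?case
    proof (intro ballI impI)
      fix x L assume x: "x \<in> {c..d}" "x \<le> c + real (Suc k) * \<delta> / 2" and L: "L \<in> parts c x"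
      show "psum f L \<le> real (Suc k)"
      proof (cases "x \<le> c + real k * \<delta>/2")
        case True then show ?thesis using Suc x L by fastforce
      next
        case False
        let ?m = "c + real k * \<delta>/2"
        have m: "c \<le> ?m" "?m \<le> x" using False d by auto
        obtain A B where AB: "A \<in> parts c ?m" "B \<in> parts ?m x" "psum f L \<le> psum f A + psum f B"
          using parts_split[OF L m] by blast
        have "psum f A \<le> real k" using Suc AB(1) m x by auto
        moreover have "psum f B < 1"
        proof -
          have B: "sorted B" "B \<noteq> []" "hd B = ?m" "last B = x" using AB(2) by (auto simp: parts_def)
          have sB: "set B \<subseteq> {c..d}" using parts_set[OF AB(2)] m x by auto
          have "x \<le> ?m + \<delta>/2" using x(2) by (simp add: field_simps)
          then have "last B - hd B < \<delta>" using B d by simp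
          then have "asum f B < 1" using H B sB by blast
          then show ?thesis using psum_le_asum[of f B] by simp
        qed
        ultimately show ?thesis using AB(3) by simp
      qed
    qed
  qed
  obtain k :: nat where k: "(d - c) / (\<delta>/2) \<le> real k" using real_arch_simple by blast
  then have "d \<le> c + real k * \<delta>/2" using d by (simp add: field_simps)
  then show ?thesis using claim[of k] by fastforce
qed

definition PV :: "(real \<Rightarrow> real) \<Rightarrow> real \<Rightarrow> real \<Rightarrow> real" where
  "PV f c x = Sup (psum f ` parts c x)"

lemma parts_ne: "c \<le> x \<Longrightarrow> [c, x] \<in> parts c x"
  by (simp add: parts_def)

lemma PV_upper:
  assumes AC: "abs_cont_on f c d" and x: "x \<in> {c..d}" and L: "L \<in> parts c x"
  shows "psum f L \<le> PV f c x"
proof -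
  obtain M where M: "\<forall>x\<in>{c..d}. \<forall>L\<in>parts c x. psum f L \<le> M" using parts_bounded[OF AC] by blast
  show ?thesis unfolding PV_def
  proof (rule cSup_upper)
    show "psum f L \<in> psum f ` parts c x" using L by simp
    show "bdd_above (psum f ` parts c x)" by (rule bdd_aboveI[of _ M]) (use M x in auto)
  qed
qed

lemma PV_least:
  assumes "c \<le> x" "\<And>L. L \<in> parts c x \<Longrightarrow> psum f L \<le> B"
  shows "PV f c x \<le> B"
  unfolding PV_def by (rule cSup_least) (use assms parts_ne in auto)

lemma PV_step:
  assumes AC: "abs_cont_on f c d" and xy: "c \<le> x" "x \<le> y" "y \<le> d"
  shows "PV f c x + max 0 (f y - f x) \<le> PV f c y"
proof -
  have "PV f c x \<le> PV f c y - max 0 (f y - f x)"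
  proof (rule PV_least)
    fix L assume L: "L \<in> parts c x"
    have s: "sorted L" "L \<noteq> []" "hd L = c" "last L = x" using L by (auto simp: parts_def)
    have "\<forall>t\<in>set L. t \<le> y" using parts_set[OF L] xy by auto
    then have "sorted (L @ [y])" using s(1) by (simp add: sorted_append)
    then have L2: "L @ [y] \<in> parts c y" using s by (simp add: parts_def)
    obtain L' l where L': "L = L' @ [l]" using s(2) by (metis rev_exhaust)
    then have "l = x" using s(4) by simp
    then have "psum f (L @ [y]) = psum f L + max 0 (f y - f x)"
      using psum_snoc[of f L' l y] L' by simp
    then show "psum f L \<le> PV f c y - max 0 (f y - f x)"
      using PV_upper[OF AC _ L2] xy by simp
  qed (use xy in simp)
  then show ?thesis by simp
qed

lemma PV_cont:
  assumes AC: "abs_cont_on f c d" and e: "e > 0"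
  obtains \<delta> where "\<delta> > 0" "\<And>x y. c \<le> x \<Longrightarrow> x \<le> y \<Longrightarrow> y \<le> d \<Longrightarrow> y - x < \<delta> \<Longrightarrow> PV f c y \<le> PV f c x + e"
proof -
  obtain \<delta> where d: "\<delta> > 0" and H: "\<And>L. sorted L \<Longrightarrow> L \<noteq> [] \<Longrightarrow> set L \<subseteq> {c..d}
       \<Longrightarrow> last L - hd L < \<delta> \<Longrightarrow> asum f L < e"
    using AC_list[OF AC e] by auto
  show ?thesis
  proof (rule that[OF d])
    fix x y assume xy: "c \<le> x" "x \<le> y" "y \<le> d" "y - x < \<delta>"
    show "PV f c y \<le> PV f c x + e"
    proof (rule PV_least)
      fix L assume L: "L \<in> parts c y"
      obtain A B where AB: "A \<in> parts c x" "B \<in> parts x y" "psum f L \<le> psum f A + psum f B"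
        using parts_split[OF L xy(1,2)] by blast
      have "psum f A \<le> PV f c x" using PV_upper[OF AC _ AB(1)] xy by simp
      moreover have "psum f B < e"
      proof -
        have B: "sorted B" "B \<noteq> []" "hd B = x" "last B = y" using AB(2) by (auto simp: parts_def)
        have "set B \<subseteq> {c..d}" using parts_set[OF AB(2)] xy by auto
        then have "asum f B < e" using H B xy by blast
        then show ?thesis using psum_le_asum[of f B] by simp
      qed
      ultimately show "psum f L \<le> PV f c x + e" using AB(3) by simp
    qed (use xy in simp)
  qed
qed

lemma AC_cont:
  assumes AC: "abs_cont_on f c d" and e: "e > 0"
  obtains \<delta> where "\<delta> > 0" "\<And>x y. c \<le> x \<Longrightarrow> x \<le> y \<Longrightarrow> y \<le> d \<Longrightarrow> y - x < \<delta> \<Longrightarrow> \<bar>f y - f x\<bar> < e"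
proof -
  obtain \<delta> where d: "\<delta> > 0" and H: "\<And>L. sorted L \<Longrightarrow> L \<noteq> [] \<Longrightarrow> set L \<subseteq> {c..d}
       \<Longrightarrow> last L - hd L < \<delta> \<Longrightarrow> asum f L < e"
    using AC_list[OF AC e] by auto
  show ?thesis
    by (rule that[OF d]) (use H[of "[_, _]"] in auto)
qed

lemma vitali_intervals:
  fixes S U :: "real set"
  assumes "open U"
    and H: "\<And>x \<delta>. x \<in> S \<Longrightarrow> \<delta> > 0 \<Longrightarrow> \<exists>u v. u < v \<and> v - u < \<delta> \<and> x \<in> {u..v} \<and> {u..v} \<subseteq> U \<and> P u v"
  obtains C where "countable C" "\<And>u v. (u,v) \<in> C \<Longrightarrow> u < v \<and> {u..v} \<subseteq> U \<and> P u v"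
    "disjoint_family_on (\<lambda>p. {fst p..snd p}) C"
    "negligible (S - (\<Union>p\<in>C. {fst p..snd p}))"
proof -
  let ?K = "{(u,v). u < v \<and> {u..v} \<subseteq> U \<and> P u v}"
  let ?a = "\<lambda>p::real\<times>real. (fst p + snd p)/2" and ?r = "\<lambda>p::real\<times>real. (snd p - fst p)/2"
  have cb: "cball (?a p) (?r p) = {fst p..snd p}" for p
    by (simp add: cball_eq_atLeastAtMost field_simps)
  obtain C where C: "countable C" "C \<subseteq> ?K"
     "pairwise (\<lambda>i j. disjnt (cball (?a i) (?r i)) (cball (?a j) (?r j))) C"
     "negligible(S - (\<Union>i \<in> C. cball (?a i) (?r i)))"
  proof (rule Vitali_covering_theorem_cballs[of ?K ?r S ?a])
    show "\<And>i. i \<in> ?K \<Longrightarrow> 0 < ?r i" by auto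
    fix x and d :: real assume "x \<in> S" "0 < d"
    then obtain u v where uv: "u < v" "v - u < 2*d" "x \<in> {u..v}" "{u..v} \<subseteq> U" "P u v"
      using H[of x "2*d"] by auto
    show "\<exists>i. i \<in> ?K \<and> x \<in> cball (?a i) (?r i) \<and> ?r i < d"
      by (rule exI[of _ "(u,v)"]) (use uv cb[of "(u,v)"] in auto)
  qed blast
  show ?thesis
  proof (rule that[OF C(1)])
    show "\<And>u v. (u,v) \<in> C \<Longrightarrow> u < v \<and> {u..v} \<subseteq> U \<and> P u v" using C(2) by auto
    show "disjoint_family_on (\<lambda>p. {fst p..snd p}) C"
      using C(3) unfolding disjoint_family_on_def pairwise_def disjnt_def cb by blast
    show "negligible (S - (\<Union>p\<in>C. {fst p..snd p}))" using C(4) unfolding cb .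
  qed
qed

lemma countable_union_intervals_measure:
  fixes C :: "(real \<times> real) set"
  assumes "countable C" "disjoint_family_on (\<lambda>p. {fst p..snd p}) C"
  shows "emeasure lborel (\<Union>p\<in>C. {fst p..snd p}) = (\<integral>\<^sup>+ p. ennreal (snd p - fst p) \<partial>count_space C)"
    and "mono G \<Longrightarrow> continuous_on UNIV G \<Longrightarrow> (\<forall>p\<in>C. fst p \<le> snd p) \<Longrightarrow>
       emeasure (interval_measure G) (\<Union>p\<in>C. {fst p..snd p}) = (\<integral>\<^sup>+ p. ennreal (G (snd p) - G (fst p)) \<partial>count_space C)"
proof -
  have "emeasure lborel (\<Union>p\<in>C. {fst p..snd p}) = (\<integral>\<^sup>+ p. emeasure lborel {fst p..snd p} \<partial>count_space C)"
    by (rule emeasure_UN_countable) (use assms in auto)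
  also have "\<dots> = (\<integral>\<^sup>+ p. ennreal (snd p - fst p) \<partial>count_space C)"
    by (rule nn_integral_cong) (simp add: emeasure_lborel_Icc_eq ennreal_neg)
  finally show "emeasure lborel (\<Union>p\<in>C. {fst p..snd p}) = (\<integral>\<^sup>+ p. ennreal (snd p - fst p) \<partial>count_space C)"
    by (simp cong: nn_integral_cong)
next
  assume G: "mono G" "continuous_on UNIV G" and le: "\<forall>p\<in>C. fst p \<le> snd p"
  have "emeasure (interval_measure G) (\<Union>p\<in>C. {fst p..snd p}) = (\<integral>\<^sup>+ p. emeasure (interval_measure G) {fst p..snd p} \<partial>count_space C)"
    by (rule emeasure_UN_countable) (use assms in auto)
  also have "\<dots> = (\<integral>\<^sup>+ p. ennreal (G (snd p) - G (fst p)) \<partial>count_space C)"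
  proof (rule nn_integral_cong)
    fix p assume "p \<in> space (count_space C)"
    then show "emeasure (interval_measure G) {fst p..snd p} = ennreal (G (snd p) - G (fst p))"
      using le G by (intro emeasure_interval_measure_Icc) (auto simp: mono_def)
  qed
  finally show "emeasure (interval_measure G) (\<Union>p\<in>C. {fst p..snd p}) = (\<integral>\<^sup>+ p. ennreal (G (snd p) - G (fst p)) \<partial>count_space C)" .
qed

definition Qd :: "(real \<Rightarrow> real) \<Rightarrow> real \<Rightarrow> real \<Rightarrow> real" where
  "Qd G x y = (G y - G x) / (y - x)"

lemma Qd_sym: "Qd G x y = Qd G y x"
  unfolding Qd_def by (simp add: field_simps divide_simps)

lemma freq_interval:
  assumes F: "frequently (\<lambda>y. R (Qd G x y)) (at x)" and U: "open U" "x \<in> U" and d: "\<delta> > 0"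
  shows "\<exists>u v. u < v \<and> v - u < \<delta> \<and> x \<in> {u..v} \<and> {u..v} \<subseteq> U \<and> R (Qd G u v)"
proof -
  obtain \<epsilon> where e: "\<epsilon> > 0" "ball x \<epsilon> \<subseteq> U" using U open_contains_ball by blast
  obtain y where y: "y \<noteq> x" "dist y x < min \<delta> \<epsilon>" "R (Qd G x y)"
    using F[unfolded frequently_at] d e by (metis UNIV_I min_less_iff_conj)
  show ?thesis
  proof (cases "x < y")
    case True
    have "{x..y} \<subseteq> U" using e y True by (auto simp: dist_real_def subset_eq)
    then show ?thesis using True y by (intro exI[of _ x] exI[of _ y]) (auto simp: dist_real_def)
  next
    case False
    then have "y < x" using y by auto
    have "{y..x} \<subseteq> U" using e y \<open>y < x\<close> by (auto simp: dist_real_def subset_eq)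
    then show ?thesis using \<open>y < x\<close> y Qd_sym[of G x y]
      by (intro exI[of _ y] exI[of _ x]) (auto simp: dist_real_def)
  qed
qed

lemma emeasure_lebesgue_borel: "X \<in> sets borel \<Longrightarrow> emeasure lebesgue X = emeasure lborel X"
  by simp

lemma measure_lebesgue_borel: "X \<in> sets borel \<Longrightarrow> measure lebesgue X = measure lborel X"
  by simp

lemma Uintervals_borel: "countable C \<Longrightarrow> (\<Union>p\<in>C. {fst p..snd p::real}) \<in> sets borel"
  by (intro sets.countable_UN') auto

lemma countable_neg: "countable (A::real set) \<Longrightarrow> negligible A"
  using countable_imp_null_set_lborel negligible_iff_null_sets null_sets_completionI by blast

lemma vitali_measure_le:
  fixes G :: "real \<Rightarrow> real"
  assumes G: "mono G" "continuous_on UNIV G" and a: "a \<ge> 0"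
    and C: "countable C" "disjoint_family_on (\<lambda>p. {fst p..snd p}) C"
    and le: "\<And>u v. (u,v) \<in> C \<Longrightarrow> u < v \<and> Qd G u v \<le> a"
  shows "emeasure (interval_measure G) (\<Union>p\<in>C. {fst p..snd p}) \<le> ennreal a * emeasure lborel (\<Union>p\<in>C. {fst p..snd p})"
proof -
  have le': "\<forall>p\<in>C. fst p \<le> snd p" using le by fastforce
  have "emeasure (interval_measure G) (\<Union>p\<in>C. {fst p..snd p}) = (\<integral>\<^sup>+ p. ennreal (G (snd p) - G (fst p)) \<partial>count_space C)"
    using countable_union_intervals_measure(2)[OF C G le'] .
  also have "\<dots> \<le> (\<integral>\<^sup>+ p. ennreal a * ennreal (snd p - fst p) \<partial>count_space C)"
  proof (rule nn_integral_mono)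
    fix p assume "p \<in> space (count_space C)"
    then have p: "p \<in> C" by simp
    obtain u v where [simp]: "p = (u,v)" by (cases p)
    have uv: "u < v" "(G v - G u) / (v - u) \<le> a" using le[of u v] p by (auto simp: Qd_def)
    then have "G v - G u \<le> a * (v - u)" by (simp add: divide_le_eq)
    then show "ennreal (G (snd p) - G (fst p)) \<le> ennreal a * ennreal (snd p - fst p)"
      using uv a by (simp add: ennreal_mult[symmetric] ennreal_leI)
  qed
  also have "\<dots> = ennreal a * (\<integral>\<^sup>+ p. ennreal (snd p - fst p) \<partial>count_space C)"
    by (rule nn_integral_cmult) simp
  also have "\<dots> = ennreal a * emeasure lborel (\<Union>p\<in>C. {fst p..snd p})"
    using countable_union_intervals_measure(1)[OF C] by simp
  finally show ?thesis .
qed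

lemma vitali_measure_ge:
  fixes G :: "real \<Rightarrow> real"
  assumes G: "mono G" "continuous_on UNIV G" and a: "a \<ge> 0"
    and C: "countable C" "disjoint_family_on (\<lambda>p. {fst p..snd p}) C"
    and le: "\<And>u v. (u,v) \<in> C \<Longrightarrow> u < v \<and> a \<le> Qd G u v"
  shows "ennreal a * emeasure lborel (\<Union>p\<in>C. {fst p..snd p}) \<le> emeasure (interval_measure G) (\<Union>p\<in>C. {fst p..snd p})"
proof -
  have le': "\<forall>p\<in>C. fst p \<le> snd p" using le by fastforce
  have "ennreal a * emeasure lborel (\<Union>p\<in>C. {fst p..snd p}) = ennreal a * (\<integral>\<^sup>+ p. ennreal (snd p - fst p) \<partial>count_space C)"
    using countable_union_intervals_measure(1)[OF C] by simp
  also have "\<dots> = (\<integral>\<^sup>+ p. ennreal a * ennreal (snd p - fst p) \<partial>count_space C)"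
    by (rule nn_integral_cmult[symmetric]) simp
  also have "\<dots> \<le> (\<integral>\<^sup>+ p. ennreal (G (snd p) - G (fst p)) \<partial>count_space C)"
  proof (rule nn_integral_mono)
    fix p assume "p \<in> space (count_space C)"
    then have p: "p \<in> C" by simp
    obtain u v where [simp]: "p = (u,v)" by (cases p)
    have uv: "u < v" "a \<le> (G v - G u) / (v - u)" using le[of u v] p by (auto simp: Qd_def)
    then have "a * (v - u) \<le> G v - G u" by (simp add: le_divide_eq)
    then show "ennreal a * ennreal (snd p - fst p) \<le> ennreal (G (snd p) - G (fst p))"
      using uv a by (simp add: ennreal_mult[symmetric] ennreal_leI)
  qed
  also have "\<dots> = emeasure (interval_measure G) (\<Union>p\<in>C. {fst p..snd p})"
    using countable_union_intervals_measure(2)[OF C G le'] by simp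
  finally show ?thesis .
qed

lemma step_ab:
  fixes G :: "real \<Rightarrow> real"
  assumes G: "mono G" "continuous_on UNIV G" and ab: "0 < a" "a < b"
    and S: "S \<subseteq> {c..d}"
    and F1: "\<And>x. x \<in> S \<Longrightarrow> frequently (\<lambda>y. Qd G x y < a) (at x)"
    and F2: "\<And>x. x \<in> S \<Longrightarrow> frequently (\<lambda>y. b < Qd G x y) (at x)"
    and T: "S \<subseteq> T" "T \<in> lmeasurable" and e: "e > 0"
  shows "\<exists>T'. S \<subseteq> T' \<and> T' \<in> lmeasurable \<and> measure lebesgue T' \<le> (a/b) * (measure lebesgue T + e)"
proof -
  obtain U0 where U0: "open U0" "T \<subseteq> U0" "(U0 - T) \<in> lmeasurable" "emeasure lebesgue (U0 - T) < ennreal e"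
    using sets_lebesgue_outer_open[OF fmeasurableD[OF T(2)] e] by blast
  have U0m: "U0 \<in> lmeasurable" using fmeasurable.Un[OF T(2) U0(3)] U0(2) by (simp add: Un_absorb1)
  have "measure lebesgue U0 \<le> measure lebesgue T + measure lebesgue (U0 - T)"
    using measure_Un_le[of T lebesgue "U0 - T"] T(2) U0(3) U0(2) by (auto simp: Un_absorb1)
  moreover have "measure lebesgue (U0 - T) < e"
    using U0(4) emeasure_eq_measure2[OF U0(3)] e by (simp add: ennreal_less_iff)
  ultimately have mU0: "measure lebesgue U0 \<le> measure lebesgue T + e" by simp
  define U where "U = U0 \<inter> {c-1<..<d+1}"
  have Uo: "open U" unfolding U_def using U0(1) by auto
  have SU: "S \<subseteq> U" using S T(1) U0(2) unfolding U_def by auto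
  have Ub: "U \<in> sets borel" using Uo by simp
  have Um: "U \<in> lmeasurable" using Uo unfolding U_def by (intro lmeasurable_open) auto
  have mU: "measure lebesgue U \<le> measure lebesgue T + e"
    using measure_mono_fmeasurable[of U U0 lebesgue] U0m mU0 fmeasurableD[OF Um] unfolding U_def by auto
  have eU: "emeasure lborel U = ennreal (measure lebesgue U)"
    using emeasure_eq_measure2[OF Um] Ub by simp
  obtain C1 where C1: "countable C1" "\<And>u v. (u,v) \<in> C1 \<Longrightarrow> u < v \<and> {u..v} \<subseteq> U \<and> Qd G u v < a"
      "disjoint_family_on (\<lambda>p. {fst p..snd p}) C1" "negligible (S - (\<Union>p\<in>C1. {fst p..snd p}))"
  proof (rule vitali_intervals[OF Uo, of S "\<lambda>u v. Qd G u v < a"])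
    fix x and \<delta> :: real assume x: "x \<in> S" "\<delta> > 0"
    show "\<exists>u v. u < v \<and> v - u < \<delta> \<and> x \<in> {u..v} \<and> {u..v} \<subseteq> U \<and> Qd G u v < a"
      by (rule freq_interval[OF F1[OF x(1)] Uo _ x(2)]) (use x SU in auto)
  qed (rule that; assumption)
  define A where "A = (\<Union>p\<in>C1. {fst p..snd p})"
  have Ab: "A \<in> sets borel" unfolding A_def using Uintervals_borel[OF C1(1)] .
  have AU: "A \<subseteq> U" unfolding A_def using C1(2) by force
  have muA: "emeasure (interval_measure G) A \<le> ennreal a * emeasure lborel A"
    unfolding A_def by (rule vitali_measure_le[OF G _ C1(1) C1(3)]) (use ab C1(2) in \<open>auto simp: less_imp_le\<close>)
  define V where "V = (\<Union>p\<in>C1. {fst p<..<snd p})"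
  have Vo: "open V" unfolding V_def by auto
  have VA: "V \<subseteq> A" unfolding V_def A_def by auto
  have SV: "negligible (S - V)"
  proof -
    have "S - V \<subseteq> (S - A) \<union> (fst ` C1 \<union> snd ` C1)" unfolding V_def A_def by force
    moreover have "negligible ((S - A) \<union> (fst ` C1 \<union> snd ` C1))"
      using C1(4) countable_neg[of "fst ` C1 \<union> snd ` C1"] C1(1) unfolding A_def by auto
    ultimately show ?thesis using negligible_subset by blast
  qed
  obtain C2 where C2: "countable C2" "\<And>u v. (u,v) \<in> C2 \<Longrightarrow> u < v \<and> {u..v} \<subseteq> V \<and> b < Qd G u v"
      "disjoint_family_on (\<lambda>p. {fst p..snd p}) C2" "negligible ((S \<inter> V) - (\<Union>p\<in>C2. {fst p..snd p}))"
  proof (rule vitali_intervals[OF Vo, of "S \<inter> V" "\<lambda>u v. b < Qd G u v"])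
    fix x and \<delta> :: real assume x: "x \<in> S \<inter> V" "\<delta> > 0"
    show "\<exists>u v. u < v \<and> v - u < \<delta> \<and> x \<in> {u..v} \<and> {u..v} \<subseteq> V \<and> b < Qd G u v"
      by (rule freq_interval[OF F2 Vo _ x(2)]) (use x in auto)
  qed (rule that; assumption)
  define B where "B = (\<Union>p\<in>C2. {fst p..snd p})"
  have Bb: "B \<in> sets borel" unfolding B_def using Uintervals_borel[OF C2(1)] .
  have BV: "B \<subseteq> V" unfolding B_def using C2(2) by force
  have muB: "ennreal b * emeasure lborel B \<le> emeasure (interval_measure G) B"
    unfolding B_def by (rule vitali_measure_ge[OF G _ C2(1) C2(3)]) (use ab C2(2) in \<open>auto simp: less_imp_le\<close>)
  have "emeasure (interval_measure G) B \<le> emeasure (interval_measure G) A"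
    by (rule emeasure_mono) (use BV VA Ab in auto)
  moreover have "emeasure lborel A \<le> emeasure lborel U"
    by (rule emeasure_mono) (use AU Ub in auto)
  ultimately have "ennreal b * emeasure lborel B \<le> ennreal a * ennreal (measure lebesgue U)"
    using muA muB eU by (metis (no_types, lifting) dual_order.trans mult_left_mono zero_le)
  moreover have eB: "emeasure lborel B = ennreal (measure lborel B)"
  proof -
    have "emeasure lborel B \<le> emeasure lborel U" by (rule emeasure_mono) (use BV VA AU Ub in auto)
    then have "emeasure lborel B \<noteq> top" using eU by (auto simp: top_unique)
    then show ?thesis by (rule emeasure_eq_ennreal_measure)
  qed
  ultimately have "ennreal (b * measure lborel B) \<le> ennreal (a * measure lebesgue U)"
    using ab by (simp add: ennreal_mult)
  then have "b * measure lborel B \<le> a * measure lebesgue U"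
    using ab by (simp add: ennreal_le_iff)
  then have mB: "measure lborel B \<le> (a/b) * measure lebesgue U"
    using ab by (simp add: field_simps)
  define N where "N = S - B"
  have Nn: "negligible N"
  proof -
    have "N \<subseteq> (S - V) \<union> ((S \<inter> V) - B)" unfolding N_def by auto
    then show ?thesis using SV C2(4) unfolding B_def by (meson negligible_Un negligible_subset)
  qed
  have Bm: "B \<in> lmeasurable"
  proof (rule bounded_set_imp_lmeasurable)
    have "B \<subseteq> {c-1<..<d+1}" using BV VA AU unfolding U_def by auto
    then have "B \<subseteq> {c-1..d+1}" by auto
    then show "bounded B" using bounded_subset[of "{c-1..d+1}" B] by auto
  qed (use Bb in auto)
  have Nnull: "N \<in> null_sets lebesgue" using Nn negligible_iff_null_sets by blast
  show ?thesis
  proof (intro exI conjI)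
    show "S \<subseteq> B \<union> N" unfolding N_def by auto
    show "B \<union> N \<in> lmeasurable" using fmeasurable.Un[OF Bm fmeasurableI_null_sets[OF Nnull]] .
    have "measure lebesgue (B \<union> N) = measure lebesgue B"
      by (rule measure_Un_null_set) (use Bm Nnull in auto)
    also have "\<dots> = measure lborel B" using Bb by simp
    also have "\<dots> \<le> (a/b) * (measure lebesgue T + e)"
      using mB mU ab by (smt (verit) divide_nonneg_nonneg mult_left_mono)
    finally show "measure lebesgue (B \<union> N) \<le> (a/b) * (measure lebesgue T + e)" .
  qed
qed

lemma negl_ab:
  fixes G :: "real \<Rightarrow> real"
  assumes G: "mono G" "continuous_on UNIV G" and ab: "0 < a" "a < b"
    and S: "S \<subseteq> {c..d}"
    and F1: "\<And>x. x \<in> S \<Longrightarrow> frequently (\<lambda>y. Qd G x y < a) (at x)"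
    and F2: "\<And>x. x \<in> S \<Longrightarrow> frequently (\<lambda>y. b < Qd G x y) (at x)"
  shows "negligible S"
proof -
  let ?M = "{measure lebesgue T | T. S \<subseteq> T \<and> T \<in> lmeasurable}"
  define m where "m = Inf ?M"
  have ne: "?M \<noteq> {}" using S by (auto intro!: exI[of _ "{c..d}"])
  have bdd: "bdd_below ?M" by (rule bdd_belowI[of _ 0]) auto
  have m0: "0 \<le> m" unfolding m_def by (rule cInf_greatest[OF ne]) auto
  have key: "m \<le> (a/b) * m + e" if e: "e > 0" for e
  proof -
    define e' where "e' = e * b / (2 * a)"
    have e': "e' > 0" using e ab by (simp add: e'_def)
    obtain x where x: "x \<in> ?M" "x < m + e'" using cInf_lessD[OF ne, of "m + e'"] e' unfolding m_def by auto
    then obtain T where T: "S \<subseteq> T" "T \<in> lmeasurable" "measure lebesgue T < m + e'" by auto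
    obtain T' where T': "S \<subseteq> T'" "T' \<in> lmeasurable" "measure lebesgue T' \<le> (a/b) * (measure lebesgue T + e')"
      using step_ab[OF G ab S F1 F2 T(1,2) e'] by blast
    have "m \<le> measure lebesgue T'" unfolding m_def by (rule cInf_lower[OF _ bdd]) (use T' in auto)
    also have "\<dots> \<le> (a/b) * (m + 2*e')"
      using T' T(3) ab by (smt (verit) divide_pos_pos mult_strict_left_mono)
    also have "\<dots> = (a/b) * m + e" using ab by (simp add: e'_def field_simps)
    finally show ?thesis .
  qed
  have "m \<le> (a/b) * m" by (rule field_le_epsilon) (use key in auto)
  then have "m * (1 - a/b) \<le> 0" by (simp add: algebra_simps)
  moreover have "1 - a/b > 0" using ab by simp
  ultimately have "m = 0" using m0 by (simp add: mult_le_0_iff)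
  show ?thesis unfolding negligible_outer
  proof (intro allI impI)
    fix e :: real assume e: "e > 0"
    obtain x where x: "x \<in> ?M" "x < e" using cInf_lessD[OF ne, of e] e \<open>m = 0\<close> unfolding m_def by auto
    then show "\<exists>T. S \<subseteq> T \<and> T \<in> lmeasurable \<and> measure lebesgue T < e" by auto
  qed
qed

lemma bound_inf:
  fixes G :: "real \<Rightarrow> real"
  assumes G: "mono G" "continuous_on UNIV G" and M: "M > 0"
    and S: "S \<subseteq> {c..d}" and cd: "c \<le> d"
    and F: "\<And>x. x \<in> S \<Longrightarrow> frequently (\<lambda>y. M < Qd G x y) (at x)"
  shows "\<exists>T. S \<subseteq> T \<and> T \<in> lmeasurable \<and> measure lebesgue T \<le> (G (d+1) - G (c-1)) / M"
proof -
  define U :: "real set" where "U = {c-1<..<d+1}"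
  have Uo: "open U" unfolding U_def by auto
  have SU: "S \<subseteq> U" using S unfolding U_def by auto
  obtain C where C: "countable C" "\<And>u v. (u,v) \<in> C \<Longrightarrow> u < v \<and> {u..v} \<subseteq> U \<and> M < Qd G u v"
      "disjoint_family_on (\<lambda>p. {fst p..snd p}) C" "negligible (S - (\<Union>p\<in>C. {fst p..snd p}))"
  proof (rule vitali_intervals[OF Uo, of S "\<lambda>u v. M < Qd G u v"])
    fix x and \<delta> :: real assume x: "x \<in> S" "\<delta> > 0"
    show "\<exists>u v. u < v \<and> v - u < \<delta> \<and> x \<in> {u..v} \<and> {u..v} \<subseteq> U \<and> M < Qd G u v"
      by (rule freq_interval[OF F[OF x(1)] Uo _ x(2)]) (use x SU in auto)
  qed (rule that; assumption)
  define B where "B = (\<Union>p\<in>C. {fst p..snd p})"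
  have Bb: "B \<in> sets borel" unfolding B_def using Uintervals_borel[OF C(1)] .
  have "B \<subseteq> U" unfolding B_def using C(2) by force
  then have BU: "B \<subseteq> {c-1..d+1}" unfolding U_def by auto
  have muB: "ennreal M * emeasure lborel B \<le> emeasure (interval_measure G) B"
    unfolding B_def by (rule vitali_measure_ge[OF G _ C(1) C(3)]) (use M C(2) in \<open>auto simp: less_imp_le\<close>)
  also have "\<dots> \<le> emeasure (interval_measure G) {c-1..d+1}"
    by (rule emeasure_mono) (use BU in auto)
  also have "\<dots> = ennreal (G (d+1) - G (c-1))"
    using G cd by (intro emeasure_interval_measure_Icc) (auto simp: mono_def)
  finally have le: "ennreal M * emeasure lborel B \<le> ennreal (G (d+1) - G (c-1))" .
  have eB: "emeasure lborel B = ennreal (measure lborel B)"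
  proof -
    have "emeasure lborel B \<le> emeasure lborel {c-1..d+1}" by (rule emeasure_mono) (use BU in auto)
    then have "emeasure lborel B \<noteq> top" using cd by (auto simp: top_unique emeasure_lborel_Icc_eq)
    then show ?thesis by (rule emeasure_eq_ennreal_measure)
  qed
  have "G (c-1) \<le> G (d+1)" using G(1) cd by (simp add: monoD)
  then have "M * measure lborel B \<le> G (d+1) - G (c-1)"
    using le eB M by (simp add: ennreal_mult[symmetric] ennreal_le_iff)
  then have mB: "measure lborel B \<le> (G (d+1) - G (c-1)) / M"
    using M by (simp add: field_simps)
  define N where "N = S - B"
  have Nnull: "N \<in> null_sets lebesgue" using C(4) negligible_iff_null_sets unfolding N_def B_def by blast
  have Bm: "B \<in> lmeasurable"
    by (rule bounded_set_imp_lmeasurable) (use Bb BU bounded_subset[of "{c-1..d+1}" B] in auto)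
  show ?thesis
  proof (intro exI conjI)
    show "S \<subseteq> B \<union> N" unfolding N_def by auto
    show "B \<union> N \<in> lmeasurable" using fmeasurable.Un[OF Bm fmeasurableI_null_sets[OF Nnull]] .
    have "measure lebesgue (B \<union> N) = measure lebesgue B"
      by (rule measure_Un_null_set) (use Bm Nnull in auto)
    also have "\<dots> = measure lborel B" using Bb by simp
    finally show "measure lebesgue (B \<union> N) \<le> (G (d+1) - G (c-1)) / M" using mB by simp
  qed
qed

lemma Qd_nonneg: "mono G \<Longrightarrow> 0 \<le> Qd G x y"
  unfolding Qd_def
proof -
  assume G: "mono G"
  consider "x < y" | "x = y" | "y < x" by linarith
  then show "0 \<le> (G y - G x) / (y - x)"
  proof cases
    case 1 then show ?thesis using monoD[OF G, of x y] by (intro divide_nonneg_nonneg) auto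
  next
    case 3 then show ?thesis using monoD[OF G, of y x] by (intro divide_nonpos_nonpos) auto
  qed simp
qed

lemma mono_diff_ae:
  fixes G :: "real \<Rightarrow> real"
  assumes G: "mono G" "continuous_on UNIV G" and cd: "c \<le> d"
  shows "negligible {x\<in>{c..d}. \<not> G differentiable (at x)}"
proof -
  define Sab where "Sab = (\<lambda>(a,b). {x\<in>{c..d}. frequently (\<lambda>y. Qd G x y < a) (at x) \<and> frequently (\<lambda>y. b < Qd G x y) (at x)})"
  define Idx where "Idx = {(a,b). a \<in> \<rat> \<and> b \<in> \<rat> \<and> 0 < a \<and> a < (b::real)}"
  define Sinf where "Sinf = {x\<in>{c..d}. \<forall>n::nat. frequently (\<lambda>y. real (Suc n) < Qd G x y) (at x)}"
  have cIdx: "countable Idx"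
  proof -
    have "Idx \<subseteq> \<rat> \<times> \<rat>" unfolding Idx_def by auto
    moreover have "countable (\<rat> \<times> (\<rat>::real set))" by (intro countable_SIGMA countable_rat)
    ultimately show ?thesis using countable_subset by blast
  qed
  have N1: "negligible (\<Union>(Sab ` Idx))"
  proof (rule negligible_countable_Union)
    show "countable (Sab ` Idx)" using cIdx by blast
    fix S assume "S \<in> Sab ` Idx"
      then obtain a b where ab: "(a,b) \<in> Idx" "S = Sab (a,b)" by auto
      show "negligible S" unfolding ab(2)
        by (rule negl_ab[OF G, of a b _ c d]) (use ab(1) in \<open>auto simp: Idx_def Sab_def\<close>)
  qed
  have N2: "negligible Sinf"
    unfolding negligible_outer_le
  proof (intro allI impI)
    fix e :: real assume e: "e > 0"
    define K where "K = G (d+1) - G (c-1)"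
    have K0: "K \<ge> 0" unfolding K_def using G(1) cd by (simp add: monoD)
    obtain n :: nat where n: "K / e \<le> real n" using real_arch_simple by blast
    have "K / real (Suc n) \<le> e"
    proof -
      have "K \<le> e * real n" using n e by (simp add: divide_le_eq mult.commute)
      also have "\<dots> \<le> e * real (Suc n)" using e by simp
      finally show ?thesis by (simp add: divide_le_eq mult.commute)
    qed
    moreover have "\<exists>T. Sinf \<subseteq> T \<and> T \<in> lmeasurable \<and> measure lebesgue T \<le> K / real (Suc n)"
      unfolding K_def by (rule bound_inf[OF G _ _ cd]) (auto simp: Sinf_def)
    then obtain T where "Sinf \<subseteq> T" "T \<in> lmeasurable" "measure lebesgue T \<le> K / real (Suc n)" by blast
    ultimately show "\<exists>T. Sinf \<subseteq> T \<and> T \<in> lmeasurable \<and> measure lebesgue T \<le> e" by auto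
  qed
  have sub: "{x\<in>{c..d}. \<not> G differentiable (at x)} \<subseteq> \<Union>(Sab ` Idx) \<union> Sinf"
  proof
    fix x assume x: "x \<in> {x\<in>{c..d}. \<not> G differentiable (at x)}"
    show "x \<in> \<Union>(Sab ` Idx) \<union> Sinf"
    proof (rule ccontr)
      assume nx: "x \<notin> \<Union>(Sab ` Idx) \<union> Sinf"
      obtain n :: nat where "\<not> frequently (\<lambda>y. real (Suc n) < Qd G x y) (at x)"
        using nx x unfolding Sinf_def by auto
      then have evn: "eventually (\<lambda>y. Qd G x y \<le> real (Suc n)) (at x)"
        by (simp add: not_frequently not_less)
      define f where "f = (\<lambda>y. ereal (Qd G x y))"
      have nb: "at x \<noteq> (bot :: real filter)" by simp
      have L0: "0 \<le> Liminf (at x) f"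
        by (rule Liminf_bounded) (simp add: f_def Qd_nonneg[OF G(1)])
      have Un: "Limsup (at x) f \<le> ereal (real (Suc n))"
        by (rule Limsup_bounded) (use evn in \<open>auto simp: f_def elim: eventually_mono\<close>)
      have LU: "Liminf (at x) f \<le> Limsup (at x) f" by (rule Liminf_le_Limsup[OF nb])
      obtain l where l: "Liminf (at x) f = ereal l" using L0 LU Un by (cases "Liminf (at x) f") auto
      obtain u where u: "Limsup (at x) f = ereal u" using L0 LU Un by (cases "Limsup (at x) f") auto
      have "l = u"
      proof (rule ccontr)
        assume "l \<noteq> u"
        then have lu: "l < u" using LU l u by simp
        obtain a where a: "a \<in> \<rat>" "l < a" "a < u" using Rats_dense_in_real[OF lu] by blast
        obtain b where b: "b \<in> \<rat>" "a < b" "b < u" using Rats_dense_in_real[OF a(3)] by blast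
        have a0: "0 < a" using L0 l a by simp
        have f1: "frequently (\<lambda>y. Qd G x y < a) (at x)"
        proof (rule ccontr)
          assume "\<not> ?thesis"
          then have "eventually (\<lambda>y. ereal a \<le> f y) (at x)" by (simp add: not_frequently not_less f_def)
          then have "ereal a \<le> Liminf (at x) f" by (rule Liminf_bounded)
          then show False using l a by simp
        qed
        have f2: "frequently (\<lambda>y. b < Qd G x y) (at x)"
        proof (rule ccontr)
          assume "\<not> ?thesis"
          then have "eventually (\<lambda>y. f y \<le> ereal b) (at x)" by (simp add: not_frequently not_less f_def)
          then have "Limsup (at x) f \<le> ereal b" by (rule Limsup_bounded)
          then show False using u b by simp
        qed
        have "(a,b) \<in> Idx" using a b a0 unfolding Idx_def by auto
        moreover have "x \<in> Sab (a,b)" using x f1 f2 unfolding Sab_def by auto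
        ultimately show False using nx by auto
      qed
      then have "(f \<longlongrightarrow> ereal l) (at x)" using Liminf_eq_Limsup[OF nb l] u by simp
      then have "(Qd G x \<longlongrightarrow> l) (at x)" unfolding f_def by (simp add: lim_ereal)
      then have "(G has_field_derivative l) (at x)"
        unfolding has_field_derivative_iff Qd_def by simp
      then show False using x real_differentiable_def by blast
    qed
  qed
  show ?thesis by (rule negligible_subset[OF _ sub]) (use N1 N2 in auto)
qed

definition clamp :: "real \<Rightarrow> real \<Rightarrow> real \<Rightarrow> real" where
  "clamp c d x = max c (min d x)"

lemma clamp_in: "c \<le> d \<Longrightarrow> clamp c d x \<in> {c..d}"
  by (auto simp: clamp_def)

lemma clamp_mono: "x \<le> y \<Longrightarrow> clamp c d x \<le> clamp c d y"
  by (auto simp: clamp_def)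

lemma clamp_lip: "\<bar>clamp c d y - clamp c d x\<bar> \<le> \<bar>y - x\<bar>"
  by (auto simp: clamp_def max_def min_def)

lemma clamp_id: "x \<in> {c..d} \<Longrightarrow> clamp c d x = x"
  by (auto simp: clamp_def)

lemma unif_cont_on_UNIV:
  fixes h :: "real \<Rightarrow> real"
  assumes "\<And>e. e > 0 \<Longrightarrow> \<exists>\<delta>>0. \<forall>x y. \<bar>y - x\<bar> < \<delta> \<longrightarrow> \<bar>h y - h x\<bar> \<le> e"
  shows "continuous_on UNIV h"
  unfolding continuous_on_iff
proof (intro ballI allI impI)
  fix x and e :: real assume e: "e > 0"
  obtain \<delta> where d: "\<delta> > 0" "\<forall>x y. \<bar>y - x\<bar> < \<delta> \<longrightarrow> \<bar>h y - h x\<bar> \<le> e/2"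
    using assms[of "e/2"] e by auto
  show "\<exists>d>0. \<forall>x'\<in>UNIV. dist x' x < d \<longrightarrow> dist (h x') (h x) < e"
  proof (intro exI[of _ \<delta>] conjI ballI impI)
    fix x' assume "dist x' x < \<delta>"
    then have "\<bar>h x' - h x\<bar> \<le> e/2" using d(2) by (simp add: dist_real_def)
    then show "dist (h x') (h x) < e" using e by (simp add: dist_real_def)
  qed (use d in auto)
qed

lemma AC_diff_ae:
  assumes AC: "abs_cont_on f c d" and cd: "c \<le> d"
  shows "negligible {x\<in>{c..d}. \<not> f differentiable (at x)}"
proof -
  define g where "g = (\<lambda>x. PV f c (clamp c d x))"
  define k where "k = (\<lambda>x. g x - f (clamp c d x))"
  have stp: "PV f c (clamp c d x) + max 0 (f (clamp c d y) - f (clamp c d x)) \<le> PV f c (clamp c d y)"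
    if "x \<le> y" for x y
    by (rule PV_step[OF AC]) (use clamp_in[OF cd] clamp_mono[OF that] in auto)
  have gm: "mono g" unfolding mono_def g_def using stp by (smt (verit))
  have km: "mono k" unfolding mono_def k_def g_def using stp by (smt (verit))
  have gc: "continuous_on UNIV g"
  proof (rule unif_cont_on_UNIV)
    fix e :: real assume e: "e > 0"
    obtain \<delta> where d: "\<delta> > 0" "\<And>x y. c \<le> x \<Longrightarrow> x \<le> y \<Longrightarrow> y \<le> d \<Longrightarrow> y - x < \<delta> \<Longrightarrow> PV f c y \<le> PV f c x + e"
      using PV_cont[OF AC e] by blast
    have "\<bar>g y - g x\<bar> \<le> e" if xy: "\<bar>y - x\<bar> < \<delta>" for x y
    proof -
      have cl: "\<bar>clamp c d y - clamp c d x\<bar> < \<delta>" using clamp_lip[of c d y x] xy by simp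
      show ?thesis
      proof (cases "x \<le> y")
        case True
        have "PV f c (clamp c d y) \<le> PV f c (clamp c d x) + e"
          using d(2)[of "clamp c d x" "clamp c d y"] clamp_in[OF cd] clamp_mono[OF True] cl by auto
        moreover have "PV f c (clamp c d x) \<le> PV f c (clamp c d y)" using stp[OF True] by simp
        ultimately show ?thesis unfolding g_def by simp
      next
        case False
        then have yx: "y \<le> x" by simp
        have "PV f c (clamp c d x) \<le> PV f c (clamp c d y) + e"
          using d(2)[of "clamp c d y" "clamp c d x"] clamp_in[OF cd] clamp_mono[OF yx] cl by auto
        moreover have "PV f c (clamp c d y) \<le> PV f c (clamp c d x)" using stp[OF yx] by simp
        ultimately show ?thesis unfolding g_def by simp
      qed
    qed
    then show "\<exists>\<delta>>0. \<forall>x y. \<bar>y - x\<bar> < \<delta> \<longrightarrow> \<bar>g y - g x\<bar> \<le> e" using d(1) by blast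
  qed
  have fc: "continuous_on UNIV (\<lambda>x. f (clamp c d x))"
  proof (rule unif_cont_on_UNIV)
    fix e :: real assume e: "e > 0"
    obtain \<delta> where d: "\<delta> > 0" "\<And>x y. c \<le> x \<Longrightarrow> x \<le> y \<Longrightarrow> y \<le> d \<Longrightarrow> y - x < \<delta> \<Longrightarrow> \<bar>f y - f x\<bar> < e"
      using AC_cont[OF AC e] by blast
    have "\<bar>f (clamp c d y) - f (clamp c d x)\<bar> \<le> e" if xy: "\<bar>y - x\<bar> < \<delta>" for x y
    proof -
      have cl: "\<bar>clamp c d y - clamp c d x\<bar> < \<delta>" using clamp_lip[of c d y x] xy by simp
      show ?thesis
      proof (cases "x \<le> y")
        case True
        then show ?thesis
          using d(2)[of "clamp c d x" "clamp c d y"] clamp_in[OF cd] clamp_mono[OF True] cl by fastforce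
      next
        case False
        then have yx: "y \<le> x" by simp
        then show ?thesis
          using d(2)[of "clamp c d y" "clamp c d x"] clamp_in[OF cd] clamp_mono[OF yx] cl by fastforce
      qed
    qed
    then show "\<exists>\<delta>>0. \<forall>x y. \<bar>y - x\<bar> < \<delta> \<longrightarrow> \<bar>f (clamp c d y) - f (clamp c d x)\<bar> \<le> e" using d(1) by blast
  qed
  have kc: "continuous_on UNIV k" unfolding k_def by (intro continuous_intros gc fc)
  have sub: "{x\<in>{c..d}. \<not> f differentiable (at x)} \<subseteq>
      {c, d} \<union> {x\<in>{c..d}. \<not> g differentiable (at x)} \<union> {x\<in>{c..d}. \<not> k differentiable (at x)}"
  proof
    fix x assume x: "x \<in> {x\<in>{c..d}. \<not> f differentiable (at x)}"
    show "x \<in> {c, d} \<union> {x\<in>{c..d}. \<not> g differentiable (at x)} \<union> {x\<in>{c..d}. \<not> k differentiable (at x)}"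
    proof (rule ccontr)
      assume "\<not> ?thesis"
      then have xi: "x \<in> {c<..<d}" and gd: "g differentiable (at x)" and kd: "k differentiable (at x)"
        using x by auto
      have "(\<lambda>t. g t - k t) differentiable (at x)" using gd kd by (intro differentiable_diff)
      then obtain D where D: "((\<lambda>t. g t - k t) has_derivative D) (at x)" unfolding differentiable_def by blast
      have "(f has_derivative D) (at x)"
      proof (rule has_derivative_transform_within_open[OF D _ xi])
        fix t assume "t \<in> {c<..<d}"
        then show "g t - k t = f t" unfolding k_def using clamp_id[of t c d] by auto
      qed simp
      then show False using x unfolding differentiable_def by blast
    qed
  qed
  show ?thesis
    by (rule negligible_subset[OF _ sub])
      (use mono_diff_ae[OF gm gc cd] mono_diff_ae[OF km kc cd] in auto)
qed

lemma AC_set: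
  assumes AC: "abs_cont_on f c d" and e: "e > 0"
  obtains \<delta> where "\<delta> > 0" "\<And>S. finite S \<Longrightarrow> (\<forall>p\<in>S. c \<le> fst p \<and> fst p < snd p \<and> snd p \<le> d)
      \<Longrightarrow> (\<forall>p\<in>S. \<forall>q\<in>S. p \<noteq> q \<longrightarrow> snd p \<le> fst q \<or> snd q \<le> fst p)
      \<Longrightarrow> (\<Sum>p\<in>S. snd p - fst p) < \<delta> \<Longrightarrow> (\<Sum>p\<in>S. \<bar>f (snd p) - f (fst p)\<bar>) < e"
proof -
  obtain \<delta> where d: "\<delta> > 0" and H0: "\<forall>(n::nat) a b. (\<forall>k<n. c \<le> a k \<and> a k \<le> b k \<and> b k \<le> d) \<and>
        (\<forall>k. Suc k < n \<longrightarrow> b k \<le> a (Suc k)) \<and>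
        (\<Sum>k<n. b k - a k) < \<delta> \<longrightarrow> (\<Sum>k<n. \<bar>f (b k) - f (a k)\<bar>) < e"
    using AC e unfolding abs_cont_on_def by blast
  note H = H0[rule_format]
  show ?thesis
  proof (rule that[OF d])
    fix S :: "(real \<times> real) set"
    assume fin: "finite S" and I: "\<forall>p\<in>S. c \<le> fst p \<and> fst p < snd p \<and> snd p \<le> d"
      and O: "\<forall>p\<in>S. \<forall>q\<in>S. p \<noteq> q \<longrightarrow> snd p \<le> fst q \<or> snd q \<le> fst p"
      and len: "(\<Sum>p\<in>S. snd p - fst p) < \<delta>"
    have inj: "inj_on fst S"
    proof (rule inj_onI)
      fix p q assume pq: "p \<in> S" "q \<in> S" "fst p = fst q"
      show "p = q"
      proof (rule ccontr)
        assume "p \<noteq> q"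
        then have "snd p \<le> fst q \<or> snd q \<le> fst p" using O pq by blast
        then show False using I pq by force
      qed
    qed
    define L where "L = sorted_list_of_set (fst ` S)"
    define P where "P = the_inv_into S fst"
    have finL: "finite (fst ` S)" using fin by simp
    have setL: "set L = fst ` S" unfolding L_def using finL by simp
    have lenL: "length L = card S" unfolding L_def using card_image[OF inj] finL by simp
    have dL: "distinct L" unfolding L_def by simp
    have sL: "sorted L" unfolding L_def by simp
    have PS: "P u \<in> S" "fst (P u) = u" if "u \<in> fst ` S" for u
      unfolding P_def using the_inv_into_into[OF inj that] f_the_inv_into_f[OF inj that] by auto
    have Pf: "P (fst p) = p" if "p \<in> S" for p
      unfolding P_def using the_inv_into_f_f[OF inj that] .
    let ?n = "length L"
    have Lk: "L ! k \<in> fst ` S" if "k < ?n" for k using that setL nth_mem by blast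
    have sumL: "(\<Sum>k<?n. \<phi> (P (L ! k))) = (\<Sum>p\<in>S. \<phi> p)" for \<phi> :: "real \<times> real \<Rightarrow> real"
    proof -
      have "(\<Sum>k<?n. \<phi> (P (L ! k))) = sum_list (map (\<lambda>u. \<phi> (P u)) L)"
        by (simp add: sum_list_sum_nth atLeast0LessThan)
      also have "\<dots> = (\<Sum>u\<in>fst ` S. \<phi> (P u))" using dL setL by (simp add: sum_list_distinct_conv_sum_set)
      also have "\<dots> = (\<Sum>p\<in>S. \<phi> (P (fst p)))" by (simp add: sum.reindex[OF inj])
      also have "\<dots> = (\<Sum>p\<in>S. \<phi> p)" using Pf by simp
      finally show ?thesis .
    qed
    have P1: "\<forall>k<?n. c \<le> L ! k \<and> L ! k \<le> snd (P (L ! k)) \<and> snd (P (L ! k)) \<le> d"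
    proof (intro allI impI)
      fix k assume k: "k < ?n"
      have "P (L ! k) \<in> S" "fst (P (L ! k)) = L ! k" using PS[OF Lk[OF k]] by auto
      then show "c \<le> L ! k \<and> L ! k \<le> snd (P (L ! k)) \<and> snd (P (L ! k)) \<le> d" using I by force
    qed
    have P2: "\<forall>k. Suc k < ?n \<longrightarrow> snd (P (L ! k)) \<le> L ! Suc k"
    proof (intro allI impI)
      fix k assume k: "Suc k < ?n"
      have lt: "L ! k < L ! Suc k" using sL dL k by (simp add: sorted_iff_nth_mono nth_eq_iff_index_eq less_le)
      let ?p = "P (L ! k)" and ?q = "P (L ! Suc k)"
      have p: "?p \<in> S" "fst ?p = L ! k" using PS[OF Lk] k by auto
      have q: "?q \<in> S" "fst ?q = L ! Suc k" using PS[OF Lk[OF k]] by auto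
      have "?p \<noteq> ?q" using p q lt by auto
      then have "snd ?p \<le> fst ?q \<or> snd ?q \<le> fst ?p" using O p q by blast
      then show "snd ?p \<le> L ! Suc k" using p q lt I by force
    qed
    have P3: "(\<Sum>k<?n. snd (P (L ! k)) - L ! k) < \<delta>"
    proof -
      have "(\<Sum>k<?n. snd (P (L ! k)) - L ! k) = (\<Sum>k<?n. snd (P (L ! k)) - fst (P (L ! k)))"
        by (rule sum.cong) (use PS Lk in auto)
      then show ?thesis using sumL[of "\<lambda>p. snd p - fst p"] len by simp
    qed
    have "(\<Sum>k<?n. \<bar>f (snd (P (L ! k))) - f (L ! k)\<bar>) < e"
      using H[of ?n "\<lambda>k. L ! k" "\<lambda>k. snd (P (L ! k))"] P1 P2 P3 by blast
    moreover have "(\<Sum>k<?n. \<bar>f (snd (P (L ! k))) - f (L ! k)\<bar>) = (\<Sum>k<?n. \<bar>f (snd (P (L ! k))) - f (fst (P (L ! k)))\<bar>)"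
      by (rule sum.cong) (use PS Lk in auto)
    ultimately show "(\<Sum>p\<in>S. \<bar>f (snd p) - f (fst p)\<bar>) < e"
      using sumL[of "\<lambda>p. \<bar>f (snd p) - f (fst p)\<bar>"] by simp
  qed
qed

lemma neg_open:
  assumes "negligible S" "e > 0"
  obtains G where "open G" "S \<subseteq> G" "G \<in> lmeasurable" "measure lebesgue G < e"
proof -
  obtain T where T: "S \<subseteq> T" "T \<in> lmeasurable" "measure lebesgue T < e/2"
    using assms negligible_outer[of S] by (meson half_gt_zero)
  obtain U where U: "open U" "T \<subseteq> U" "(U - T) \<in> lmeasurable" "emeasure lebesgue (U - T) < ennreal (e/2)"
    using sets_lebesgue_outer_open[OF fmeasurableD[OF T(2)], of "e/2"] assms by auto
  have Um: "U \<in> lmeasurable" using fmeasurable.Un[OF T(2) U(3)] U(2) by (simp add: Un_absorb1)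
  have "measure lebesgue U \<le> measure lebesgue T + measure lebesgue (U - T)"
    using measure_Un_le[of T lebesgue "U - T"] T(2) U(3) U(2) by (auto simp: Un_absorb1)
  moreover have "measure lebesgue (U - T) < e/2"
    using U(4) emeasure_eq_measure2[OF U(3)] assms by (simp add: ennreal_less_iff)
  ultimately have "measure lebesgue U < e" using T(3) by simp
  then show ?thesis using that U Um T by blast
qed

lemma content_sum_in_open:
  assumes D: "D tagged_division_of {a..b}" and Q: "Q \<subseteq> D"
    and sub: "\<And>x K. (x,K) \<in> Q \<Longrightarrow> K \<subseteq> G" and G: "G \<in> lmeasurable"
  shows "(\<Sum>(x,K)\<in>Q. measure lborel K) \<le> measure lebesgue G"
proof -
  have finQ: "finite Q" using tagged_division_ofD(1)[OF D] Q finite_subset by blast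
  have "(\<Sum>(x,K)\<in>Q. measure lborel K) = (\<Sum>p\<in>Q. measure lborel (snd p))" by (simp add: split_def)
  also have "\<dots> = (\<Sum>K\<in>snd ` Q. measure lborel K)"
  proof (rule sym, rule sum.reindex_nontrivial[OF finQ, unfolded comp_def])
    fix p q assume pq: "p \<in> Q" "q \<in> Q" "p \<noteq> q" "snd p = snd q"
    obtain x K where p: "p = (x,K)" by (cases p)
    obtain y K' where q: "q = (y,K')" by (cases q)
    have "interior K \<inter> interior K' = {}"
      using tagged_division_ofD(5)[OF D, of x K y K'] pq p q Q by auto
    then have "interior K = {}" using pq p q by simp
    moreover obtain u v where "K = cbox u v" using tagged_division_ofD(4)[OF D, of x K] pq p Q by auto
    ultimately show "measure lborel (snd p) = 0" using p by (metis content_eq_0_interior snd_conv)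
  qed
  also have "\<dots> = measure lebesgue (\<Union>(snd ` Q))"
  proof -
    have d1: "snd ` D division_of {a..b}" by (rule division_of_tagged_division[OF D])
    then have "snd ` D division_of \<Union>(snd ` D)" by (metis division_ofD(6))
    then have d2: "snd ` Q division_of \<Union>(snd ` Q)" by (rule division_of_subset) (use Q in auto)
    have "(\<Sum>K\<in>snd ` Q. measure lebesgue K) = measure lebesgue (\<Union>(snd ` Q))"
      by (rule content_division[OF d2])
    moreover have "(\<Sum>K\<in>snd ` Q. measure lebesgue K) = (\<Sum>K\<in>snd ` Q. measure lborel K)"
    proof (rule sum.cong)
      fix K assume "K \<in> snd ` Q"
      then obtain u v where "K = cbox u v" using division_ofD(4)[OF d2] by blast
      then show "measure lebesgue K = measure lborel K" by simp
    qed simp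
    ultimately show ?thesis by simp
  qed
  also have "\<dots> \<le> measure lebesgue G"
  proof (rule measure_mono_fmeasurable[OF _ _ G])
    show "\<Union>(snd ` Q) \<subseteq> G" using sub by force
    have d1: "snd ` D division_of {a..b}" by (rule division_of_tagged_division[OF D])
    then have "snd ` D division_of \<Union>(snd ` D)" by (metis division_ofD(6))
    then have d2: "snd ` Q division_of \<Union>(snd ` Q)" by (rule division_of_subset) (use Q in auto)
    show "\<Union>(snd ` Q) \<in> sets lebesgue" using lmeasurable_division[OF d2] by auto
  qed
  finally show ?thesis .
qed

lemma half_sum_le:
  fixes T :: "nat set" and \<theta> :: real assumes "finite T" "\<theta> \<ge> 0"
  shows "(\<Sum>n\<in>T. \<theta> * (1/2)^Suc n) \<le> \<theta>"
proof -
  have "(\<Sum>n\<in>T. (1/2::real)^Suc n) \<le> (\<Sum>n. (1/2::real)^Suc n)"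
    by (rule sum_le_suminf) (use power_half_series assms in \<open>auto simp: sums_iff\<close>)
  also have "\<dots> = 1" using power_half_series by (simp add: sums_iff)
  finally have s1: "(\<Sum>n\<in>T. (1/2::real)^Suc n) \<le> 1" .
  have "(\<Sum>n\<in>T. \<theta> * (1/2)^Suc n) = \<theta> * (\<Sum>n\<in>T. (1/2)^Suc n)" by (simp add: sum_distrib_left)
  also have "\<dots> \<le> \<theta>" using s1 assms(2) by (simp add: mult_left_le)
  finally show ?thesis .
qed

lemma grouped_bound:
  fixes Q :: "'a set" and c :: "'a \<Rightarrow> real" and N :: "'a \<Rightarrow> nat"
  assumes fin: "finite Q" and c: "\<And>p. p \<in> Q \<Longrightarrow> 0 \<le> c p" and th: "\<theta> \<ge> 0"
    and m: "\<And>n. (\<Sum>p\<in>{p\<in>Q. N p = n}. c p) \<le> \<theta> * (1/2)^Suc n / (real n + 1)"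
  shows "(\<Sum>p\<in>Q. c p * (real (N p) + 1)) \<le> \<theta>" and "(\<Sum>p\<in>Q. c p) \<le> \<theta>"
proof -
  have fT: "finite (N ` Q)" using fin by simp
  have "(\<Sum>p\<in>Q. c p * (real (N p) + 1)) = (\<Sum>n\<in>N ` Q. \<Sum>p\<in>{p\<in>Q. N p = n}. c p * (real (N p) + 1))"
    by (rule sum.group[OF fin fT, symmetric]) auto
  also have "\<dots> = (\<Sum>n\<in>N ` Q. (real n + 1) * (\<Sum>p\<in>{p\<in>Q. N p = n}. c p))"
    by (rule sum.cong) (auto simp: sum_distrib_left mult.commute intro: sum.cong)
  also have "\<dots> \<le> (\<Sum>n\<in>N ` Q. \<theta> * (1/2)^Suc n)"
  proof (rule sum_mono)
    fix n assume "n \<in> N ` Q"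
    have "(real n + 1) * (\<Sum>p\<in>{p\<in>Q. N p = n}. c p) \<le> (real n + 1) * (\<theta> * (1/2)^Suc n / (real n + 1))"
      by (rule mult_left_mono[OF m]) simp
    moreover have "(real n + 1) * (\<theta> * (1/2)^Suc n / (real n + 1)) = \<theta> * (1/2)^Suc n"
    proof -
      have "real n + 1 \<noteq> 0" by simp
      then show ?thesis by (metis nonzero_mult_div_cancel_left times_divide_eq_right)
    qed
    ultimately show "(real n + 1) * (\<Sum>p\<in>{p\<in>Q. N p = n}. c p) \<le> \<theta> * (1/2)^Suc n" by (rule ord_le_eq_trans)
  qed
  also have "\<dots> \<le> \<theta>" by (rule half_sum_le[OF fT th])
  finally show "(\<Sum>p\<in>Q. c p * (real (N p) + 1)) \<le> \<theta>" .
  have "(\<Sum>p\<in>Q. c p) \<le> (\<Sum>p\<in>Q. c p * (real (N p) + 1))"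
    by (rule sum_mono) (use c in \<open>simp add: algebra_simps\<close>)
  then show "(\<Sum>p\<in>Q. c p) \<le> \<theta>" using \<open>(\<Sum>p\<in>Q. c p * (real (N p) + 1)) \<le> \<theta>\<close> by simp
qed

lemma tagged_elem:
  assumes D: "D tagged_division_of {a..b}" and xK: "(x,K) \<in> D"
  shows "\<exists>v w. K = {v..w} \<and> v \<le> w \<and> a \<le> v \<and> w \<le> b \<and> x \<in> {v..w} \<and> Inf K = v \<and> Sup K = w
     \<and> measure lborel K = w - v"
proof -
  obtain v w where K: "K = cbox v w" using tagged_division_ofD(4)[OF D xK] by blast
  have x: "x \<in> K" using tagged_division_ofD(2)[OF D xK] .
  have sub: "K \<subseteq> {a..b}" using tagged_division_ofD(3)[OF D xK] .
  have vw: "v \<le> w" using x K by auto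
  show ?thesis using K vw x sub by (intro exI[of _ v] exI[of _ w]) auto
qed

lemma deriv_straddle:
  assumes der: "(u has_real_derivative h) (at x within S)" and e: "e > 0"
  shows "\<exists>d>0. \<forall>y\<in>S. \<bar>y - x\<bar> < d \<longrightarrow> \<bar>u y - u x - h * (y - x)\<bar> \<le> e * \<bar>y - x\<bar>"
proof -
  have "((\<lambda>y. (u y - u x) / (y - x)) \<longlongrightarrow> h) (at x within S)"
    using der by (simp add: has_field_derivative_iff)
  then have "eventually (\<lambda>y. dist ((u y - u x) / (y - x)) h < e) (at x within S)"
    using tendstoD e by blast
  then obtain d where d: "d > 0" "\<forall>y\<in>S. y \<noteq> x \<and> dist y x < d \<longrightarrow> dist ((u y - u x) / (y - x)) h < e"
    unfolding eventually_at by blast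
  have "\<bar>u y - u x - h * (y - x)\<bar> \<le> e * \<bar>y - x\<bar>" if y: "y \<in> S" "\<bar>y - x\<bar> < d" for y
  proof (cases "y = x")
    case False
    then have "\<bar>(u y - u x) / (y - x) - h\<bar> < e" using d y by (auto simp: dist_real_def)
    moreover have "u y - u x - h * (y - x) = ((u y - u x) / (y - x) - h) * (y - x)"
      using False by (simp add: field_simps)
    ultimately show ?thesis by (simp add: abs_mult mult_right_mono)
  qed simp
  then show ?thesis using d(1) by blast
qed

lemma AC_FTC:
  assumes AC: "abs_cont_on u a b" and ab: "a \<le> b" and E: "negligible E"
    and der: "\<And>x. x \<in> {a..b} - E \<Longrightarrow> (u has_real_derivative h x) (at x within {a..b})"
  shows "(h has_integral (u b - u a)) {a..b}"
  unfolding has_integral_real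
proof (intro allI impI)
  fix e :: real assume e: "e > 0"
  define \<eta> where "\<eta> = e / (3 * (b - a + 1))"
  have \<eta>: "\<eta> > 0" using e ab by (simp add: \<eta>_def)
  have \<eta>ba: "\<eta> * (b - a) < e/3"
  proof -
    have "\<eta> * (b - a) = (e/3) * ((b - a) / (b - a + 1))" by (simp add: \<eta>_def field_simps)
    also have "\<dots> < (e/3) * 1" using e ab by (intro mult_strict_left_mono) auto
    finally show ?thesis by simp
  qed
  obtain \<delta>A where \<delta>A: "\<delta>A > 0" and ACs: "\<And>S. finite S \<Longrightarrow> (\<forall>p\<in>S. a \<le> fst p \<and> fst p < snd p \<and> snd p \<le> b)
      \<Longrightarrow> (\<forall>p\<in>S. \<forall>q\<in>S. p \<noteq> q \<longrightarrow> snd p \<le> fst q \<or> snd q \<le> fst p)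
      \<Longrightarrow> (\<Sum>p\<in>S. snd p - fst p) < \<delta>A \<Longrightarrow> (\<Sum>p\<in>S. \<bar>u (snd p) - u (fst p)\<bar>) < e/3"
  proof (rule AC_set[OF AC, of "e/3"])
    show "e/3 > 0" using e by simp
  qed (rule that; assumption)
  define \<theta> where "\<theta> = min \<delta>A (e/3) / 2"
  have \<theta>: "\<theta> > 0" "\<theta> < \<delta>A" "\<theta> < e/3" using \<delta>A e by (auto simp: \<theta>_def)
  define nE where "nE x = nat \<lfloor>\<bar>h x\<bar>\<rfloor>" for x
  have hnE: "\<bar>h x\<bar> \<le> real (nE x) + 1" for x
  proof -
    have "\<bar>h x\<bar> < real_of_int \<lfloor>\<bar>h x\<bar>\<rfloor> + 1" by linarith
    moreover have "real_of_int \<lfloor>\<bar>h x\<bar>\<rfloor> = real (nE x)" unfolding nE_def by simp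
    ultimately show ?thesis by simp
  qed
  have "\<forall>n. \<exists>G. open G \<and> {x\<in>E. nE x = n} \<subseteq> G \<and> G \<in> lmeasurable \<and>
          measure lebesgue G < \<theta> * (1/2)^Suc n / (real n + 1)"
  proof
    fix n
    have "negligible {x\<in>E. nE x = n}" using E by (rule negligible_subset) auto
    moreover have "\<theta> * (1/2)^Suc n / (real n + 1) > 0" using \<theta> by simp
    ultimately obtain G where "open G" "{x\<in>E. nE x = n} \<subseteq> G" "G \<in> lmeasurable"
        "measure lebesgue G < \<theta> * (1/2)^Suc n / (real n + 1)"
      by (rule neg_open)
    then show "\<exists>G. open G \<and> {x\<in>E. nE x = n} \<subseteq> G \<and> G \<in> lmeasurable \<and>
          measure lebesgue G < \<theta> * (1/2)^Suc n / (real n + 1)" by blast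
  qed
  then have "\<exists>GG. \<forall>n. open (GG n) \<and> {x\<in>E. nE x = n} \<subseteq> GG n \<and> GG n \<in> lmeasurable \<and>
          measure lebesgue (GG n) < \<theta> * (1/2)^Suc n / (real n + 1)" by (rule choice)
  then obtain GG where GG0: "\<forall>n. open (GG n) \<and> {x\<in>E. nE x = n} \<subseteq> GG n \<and> GG n \<in> lmeasurable \<and>
          measure lebesgue (GG n) < \<theta> * (1/2)^Suc n / (real n + 1)"
    by (elim exE)
  then have GG: "\<And>n. open (GG n)" "\<And>n. {x\<in>E. nE x = n} \<subseteq> GG n" "\<And>n. GG n \<in> lmeasurable"
      "\<And>n. measure lebesgue (GG n) < \<theta> * (1/2)^Suc n / (real n + 1)" by blast+
  have "\<forall>x\<in>E. \<exists>r>0. ball x r \<subseteq> GG (nE x)"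
  proof
    fix x assume "x \<in> E"
    then have "x \<in> GG (nE x)" using GG(2)[of "nE x"] by auto
    then show "\<exists>r>0. ball x r \<subseteq> GG (nE x)" using GG(1) open_contains_ball by blast
  qed
  then have "\<exists>rE. \<forall>x\<in>E. rE x > 0 \<and> ball x (rE x) \<subseteq> GG (nE x)" by (rule bchoice)
  then obtain rE where rE0: "\<forall>x\<in>E. rE x > 0 \<and> ball x (rE x) \<subseteq> GG (nE x)"
    by (elim exE)
  then have rE: "\<And>x. x \<in> E \<Longrightarrow> rE x > 0" "\<And>x. x \<in> E \<Longrightarrow> ball x (rE x) \<subseteq> GG (nE x)" by blast+
  have "\<forall>x\<in>{a..b} - E. \<exists>d>0. \<forall>y\<in>{a..b}. \<bar>y - x\<bar> < d \<longrightarrow> \<bar>u y - u x - h x * (y - x)\<bar> \<le> \<eta> * \<bar>y - x\<bar>"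
    using deriv_straddle[OF der \<eta>] by blast
  then have "\<exists>dG. \<forall>x\<in>{a..b} - E. dG x > 0 \<and> (\<forall>y\<in>{a..b}. \<bar>y - x\<bar> < dG x \<longrightarrow> \<bar>u y - u x - h x * (y - x)\<bar> \<le> \<eta> * \<bar>y - x\<bar>)"
    by (rule bchoice)
  then obtain dG where dG0: "\<forall>x\<in>{a..b} - E. dG x > 0 \<and> (\<forall>y\<in>{a..b}. \<bar>y - x\<bar> < dG x \<longrightarrow> \<bar>u y - u x - h x * (y - x)\<bar> \<le> \<eta> * \<bar>y - x\<bar>)"
    by (elim exE)
  then have dG: "\<And>x. x \<in> {a..b} - E \<Longrightarrow> dG x > 0"
      "\<And>x y. x \<in> {a..b} - E \<Longrightarrow> y \<in> {a..b} \<Longrightarrow> \<bar>y - x\<bar> < dG x \<Longrightarrow> \<bar>u y - u x - h x * (y - x)\<bar> \<le> \<eta> * \<bar>y - x\<bar>"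
    by blast+
  define rad where "rad x = (if x \<in> E then rE x else if x \<in> {a..b} then dG x else 1)" for x
  have rad0: "rad x > 0" for x using rE dG unfolding rad_def by auto
  show "\<exists>\<gamma>. gauge \<gamma> \<and> (\<forall>\<D>. \<D> tagged_division_of {a..b} \<and> \<gamma> fine \<D> \<longrightarrow>
            norm ((\<Sum>(x, k)\<in>\<D>. measure lborel k *\<^sub>R h x) - (u b - u a)) < e)"
  proof (intro exI conjI allI impI)
    show "gauge (\<lambda>x. ball x (rad x))" using rad0 by (intro gauge_ball_dependent) auto
    fix D assume "D tagged_division_of {a..b} \<and> (\<lambda>x. ball x (rad x)) fine D"
    then have D: "D tagged_division_of {a..b}" and fine: "(\<lambda>x. ball x (rad x)) fine D" by auto
    have finD: "finite D" using tagged_division_ofD(1)[OF D] .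
    note el = tagged_elem[OF D]
    have inball: "K \<subseteq> ball x (rad x)" if "(x,K) \<in> D" for x K using fineD[OF fine that] .
    define \<Delta> where "\<Delta> p = measure lborel (snd p) * h (fst p) - (u (Sup (snd p)) - u (Inf (snd p)))" for p
    define D1 where "D1 = {p\<in>D. fst p \<notin> E}"
    define D2 where "D2 = {p\<in>D. fst p \<in> E}"
    have D12: "D = D1 \<union> D2" "D1 \<inter> D2 = {}" "finite D1" "finite D2"
      using finD unfolding D1_def D2_def by auto
    have tot: "(\<Sum>(x, k)\<in>D. measure lborel k *\<^sub>R h x) - (u b - u a) = (\<Sum>p\<in>D1. \<Delta> p) + (\<Sum>p\<in>D2. \<Delta> p)"
    proof -
      have "u b - u a = (\<Sum>(x,K)\<in>D. u (Sup K) - u (Inf K))"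
        using additive_tagged_division_1[OF ab D, of u] by simp
      then have "(\<Sum>(x, k)\<in>D. measure lborel k *\<^sub>R h x) - (u b - u a) = (\<Sum>p\<in>D. \<Delta> p)"
        by (simp add: \<Delta>_def split_def sum_subtractf)
      also have "\<dots> = (\<Sum>p\<in>D1. \<Delta> p) + (\<Sum>p\<in>D2. \<Delta> p)"
        using D12 by (simp add: sum.union_disjoint)
      finally show ?thesis .
    qed
    have b1: "\<bar>\<Delta> p\<bar> \<le> \<eta> * measure lborel (snd p)" if p: "p \<in> D1" for p
    proof -
      obtain x K where pxK: "p = (x,K)" by (cases p)
      have xK: "(x,K) \<in> D" "x \<notin> E" using p pxK unfolding D1_def by auto
      obtain v w where vw: "K = {v..w}" "v \<le> w" "a \<le> v" "w \<le> b" "x \<in> {v..w}" "Inf K = v" "Sup K = w"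
          "measure lborel K = w - v" using el[OF xK(1)] by blast
      have xab: "x \<in> {a..b} - E" using vw xK by auto
      have rx: "rad x = dG x" using xab unfolding rad_def by auto
      have "v \<in> K" "w \<in> K" using vw by auto
      then have "v \<in> ball x (rad x)" "w \<in> ball x (rad x)" using subsetD[OF inball[OF xK(1)]] by blast+
      then have vb: "\<bar>v - x\<bar> < dG x" "\<bar>w - x\<bar> < dG x"
        using rx by (auto simp: dist_real_def)
      have 1: "\<bar>u v - u x - h x * (v - x)\<bar> \<le> \<eta> * \<bar>v - x\<bar>" by (rule dG(2)[OF xab _ vb(1)]) (use vw in auto)
      have 2: "\<bar>u w - u x - h x * (w - x)\<bar> \<le> \<eta> * \<bar>w - x\<bar>" by (rule dG(2)[OF xab _ vb(2)]) (use vw in auto)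
      have "\<Delta> p = (u v - u x - h x * (v - x)) - (u w - u x - h x * (w - x))"
        unfolding \<Delta>_def pxK using vw by (simp add: algebra_simps)
      then have "\<bar>\<Delta> p\<bar> \<le> \<eta> * \<bar>v - x\<bar> + \<eta> * \<bar>w - x\<bar>" using 1 2 by linarith
      also have "\<dots> = \<eta> * (w - v)" using vw by (simp add: algebra_simps)
      finally show ?thesis using vw pxK by simp
    qed
    have S1: "\<bar>\<Sum>p\<in>D1. \<Delta> p\<bar> < e/3"
    proof -
      have "\<bar>\<Sum>p\<in>D1. \<Delta> p\<bar> \<le> (\<Sum>p\<in>D1. \<bar>\<Delta> p\<bar>)" by (rule sum_abs)
      also have "\<dots> \<le> (\<Sum>p\<in>D1. \<eta> * measure lborel (snd p))" by (rule sum_mono) (rule b1)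
      also have "\<dots> \<le> (\<Sum>p\<in>D. \<eta> * measure lborel (snd p))"
        by (rule sum_mono2[OF finD]) (auto simp: D1_def intro: mult_nonneg_nonneg less_imp_le[OF \<eta>])
      also have "\<dots> = \<eta> * (b - a)"
      proof -
        have "(\<Sum>(x,K)\<in>D. measure lborel K) = measure lborel (cbox a b)" by (rule additive_content_tagged_division) (use D in simp)
        then have "(\<Sum>p\<in>D. measure lborel (snd p)) = b - a" using ab by (simp add: split_def)
        then show ?thesis by (simp add: sum_distrib_left[symmetric])
      qed
      finally show ?thesis using \<eta>ba by simp
    qed
    have D2sub: "D2 \<subseteq> D" unfolding D2_def by auto
    have grp: "(\<Sum>p\<in>{p\<in>D2. nE (fst p) = n}. measure lborel (snd p)) \<le> \<theta> * (1/2)^Suc n / (real n + 1)" for n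
    proof -
      have "(\<Sum>p\<in>{p\<in>D2. nE (fst p) = n}. measure lborel (snd p)) = (\<Sum>(x,K)\<in>{p\<in>D2. nE (fst p) = n}. measure lborel K)"
        by (simp add: split_def)
      also have "\<dots> \<le> measure lebesgue (GG n)"
      proof (rule content_sum_in_open[OF D _ _ GG(3)])
        show "{p\<in>D2. nE (fst p) = n} \<subseteq> D" unfolding D2_def by auto
        fix x K assume "(x,K) \<in> {p\<in>D2. nE (fst p) = n}"
        then have xK: "(x,K) \<in> D" "x \<in> E" "nE x = n" unfolding D2_def by auto
        have "K \<subseteq> ball x (rE x)" using inball[OF xK(1)] xK(2) unfolding rad_def by simp
        then show "K \<subseteq> GG n" using rE(2)[OF xK(2)] xK(3) by auto
      qed
      also have "\<dots> \<le> \<theta> * (1/2)^Suc n / (real n + 1)" using GG(4)[of n] by simp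
      finally show ?thesis .
    qed
    have fD2: "finite D2" using D12 by simp
    have S2a: "\<bar>\<Sum>p\<in>D2. measure lborel (snd p) * h (fst p)\<bar> \<le> \<theta>"
    proof -
      have "\<bar>\<Sum>p\<in>D2. measure lborel (snd p) * h (fst p)\<bar> \<le> (\<Sum>p\<in>D2. \<bar>measure lborel (snd p) * h (fst p)\<bar>)"
        by (rule sum_abs)
      also have "\<dots> \<le> (\<Sum>p\<in>D2. measure lborel (snd p) * (real (nE (fst p)) + 1))"
        by (rule sum_mono) (simp add: abs_mult mult_left_mono hnE)
      also have "\<dots> \<le> \<theta>" by (rule grouped_bound(1)[OF fD2 _ _ grp]) (use \<theta> in auto)
      finally show ?thesis .
    qed
    have S2c: "(\<Sum>p\<in>D2. measure lborel (snd p)) \<le> \<theta>"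
      by (rule grouped_bound(2)[OF fD2 _ _ grp]) (use \<theta> in auto)
    have S2b: "\<bar>\<Sum>p\<in>D2. u (Sup (snd p)) - u (Inf (snd p))\<bar> < e/3"
    proof -
      define D2' where "D2' = {p\<in>D2. measure lborel (snd p) \<noteq> 0}"
      define IS where "IS p = (Inf (snd p), Sup (snd p))" for p :: "real \<times> real set"
      have D2'sub: "D2' \<subseteq> D" unfolding D2'_def D2_def by auto
      have fD2': "finite D2'" using fD2 unfolding D2'_def by simp
      have ev: "\<exists>v w. snd p = {v..w} \<and> v < w \<and> a \<le> v \<and> w \<le> b \<and> Inf (snd p) = v \<and> Sup (snd p) = w
            \<and> measure lborel (snd p) = w - v" if p: "p \<in> D2'" for p
      proof -
        obtain x K where pxK: "p = (x,K)" by (cases p)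
        obtain v w where vw: "K = {v..w}" "v \<le> w" "a \<le> v" "w \<le> b" "Inf K = v" "Sup K = w"
            "measure lborel K = w - v" using el[of x K] p pxK D2'sub by blast
        have "v \<noteq> w" using p pxK vw unfolding D2'_def by auto
        then show ?thesis using vw pxK by (intro exI[of _ v] exI[of _ w]) auto
      qed
      have inj: "inj_on IS D2'"
      proof (rule inj_onI)
        fix p q assume pq: "p \<in> D2'" "q \<in> D2'" "IS p = IS q"
        obtain v w where p: "snd p = {v..w}" "v < w" "Inf (snd p) = v" "Sup (snd p) = w" using ev[OF pq(1)] by blast
        obtain v' w' where q: "snd q = {v'..w'}" "v' < w'" "Inf (snd q) = v'" "Sup (snd q) = w'" using ev[OF pq(2)] by blast
        have K: "snd p = snd q" using pq(3) p q unfolding IS_def by auto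
        show "p = q"
        proof (rule ccontr)
          assume "p \<noteq> q"
          then have "interior (snd p) \<inter> interior (snd q) = {}"
            using tagged_division_ofD(5)[OF D, of "fst p" "snd p" "fst q" "snd q"] pq D2'sub by auto
          moreover have "interior (snd p) = {v<..<w}" using p(1) by simp
          ultimately have "{v<..<w} = {}" using K by simp
          then show False using p(2) by auto
        qed
      qed
      have "\<bar>\<Sum>p\<in>D2. u (Sup (snd p)) - u (Inf (snd p))\<bar> \<le> (\<Sum>p\<in>D2. \<bar>u (Sup (snd p)) - u (Inf (snd p))\<bar>)"
        by (rule sum_abs)
      also have "\<dots> = (\<Sum>p\<in>D2'. \<bar>u (Sup (snd p)) - u (Inf (snd p))\<bar>)"
      proof (rule sum.mono_neutral_right[OF fD2])
        show "D2' \<subseteq> D2" unfolding D2'_def by auto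
        show "\<forall>p\<in>D2 - D2'. \<bar>u (Sup (snd p)) - u (Inf (snd p))\<bar> = 0"
        proof
          fix p assume p: "p \<in> D2 - D2'"
          obtain x K where pxK: "p = (x,K)" by (cases p)
          obtain v w where vw: "K = {v..w}" "v \<le> w" "Inf K = v" "Sup K = w" "measure lborel K = w - v"
            using el[of x K] p pxK D2sub by blast
          have "v = w" using p pxK vw unfolding D2'_def by auto
          then show "\<bar>u (Sup (snd p)) - u (Inf (snd p))\<bar> = 0" using vw pxK by simp
        qed
      qed
      also have "\<dots> = (\<Sum>q\<in>IS ` D2'. \<bar>u (snd q) - u (fst q)\<bar>)"
        using sum.reindex[OF inj, of "\<lambda>q. \<bar>u (snd q) - u (fst q)\<bar>"] by (simp add: IS_def comp_def)
      also have "\<dots> < e/3"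
      proof (rule ACs)
        show "finite (IS ` D2')" using fD2' by simp
        show "\<forall>q\<in>IS ` D2'. a \<le> fst q \<and> fst q < snd q \<and> snd q \<le> b"
          using ev unfolding IS_def by fastforce
        show "\<forall>q\<in>IS ` D2'. \<forall>q'\<in>IS ` D2'. q \<noteq> q' \<longrightarrow> snd q \<le> fst q' \<or> snd q' \<le> fst q"
        proof (intro ballI impI)
          fix q q' assume qq: "q \<in> IS ` D2'" "q' \<in> IS ` D2'" "q \<noteq> q'"
          then obtain p p' where pp: "p \<in> D2'" "p' \<in> D2'" "q = IS p" "q' = IS p'" by auto
          then have "p \<noteq> p'" using qq by auto
          then have disj: "interior (snd p) \<inter> interior (snd p') = {}"
            using tagged_division_ofD(5)[OF D, of "fst p" "snd p" "fst p'" "snd p'"] pp D2'sub by auto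
          obtain v w where p: "snd p = {v..w}" "v < w" "Inf (snd p) = v" "Sup (snd p) = w" using ev[OF pp(1)] by blast
          obtain v' w' where p': "snd p' = {v'..w'}" "v' < w'" "Inf (snd p') = v'" "Sup (snd p') = w'" using ev[OF pp(2)] by blast
          have "{v<..<w} \<inter> {v'<..<w'} = {}" using disj p p' by simp
          then have "w \<le> v' \<or> w' \<le> v"
          proof (rule contrapos_pp)
            assume "\<not> (w \<le> v' \<or> w' \<le> v)"
            then have "(max v v' + min w w') / 2 \<in> {v<..<w} \<inter> {v'<..<w'}" using p(2) p'(2) by auto
            then show "{v<..<w} \<inter> {v'<..<w'} \<noteq> {}" by blast
          qed
          then show "snd q \<le> fst q' \<or> snd q' \<le> fst q" using pp p p' unfolding IS_def by auto
        qed
        have "(\<Sum>q\<in>IS ` D2'. snd q - fst q) = (\<Sum>p\<in>D2'. Sup (snd p) - Inf (snd p))"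
          using sum.reindex[OF inj, of "\<lambda>q. snd q - fst q"] by (simp add: IS_def comp_def)
        also have "\<dots> = (\<Sum>p\<in>D2'. measure lborel (snd p))"
          by (rule sum.cong) (use ev in force)+
        also have "\<dots> \<le> (\<Sum>p\<in>D2. measure lborel (snd p))"
          by (rule sum_mono2[OF fD2]) (auto simp: D2'_def)
        also have "\<dots> \<le> \<theta>" by (rule S2c)
        finally show "(\<Sum>q\<in>IS ` D2'. snd q - fst q) < \<delta>A" using \<theta> by simp
      qed
      finally show ?thesis .
    qed
    have "(\<Sum>p\<in>D2. \<Delta> p) = (\<Sum>p\<in>D2. measure lborel (snd p) * h (fst p)) - (\<Sum>p\<in>D2. u (Sup (snd p)) - u (Inf (snd p)))"
      unfolding \<Delta>_def by (simp add: sum_subtractf)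
    then have "\<bar>\<Sum>p\<in>D2. \<Delta> p\<bar> < \<theta> + e/3" using S2a S2b by linarith
    then have "\<bar>(\<Sum>(x, k)\<in>D. measure lborel k *\<^sub>R h x) - (u b - u a)\<bar> < e" using tot S1 \<theta> by linarith
    then show "norm ((\<Sum>(x, k)\<in>D. measure lborel k *\<^sub>R h x) - (u b - u a)) < e" by simp
  qed
qed

lemma ivl_mem: "x \<in> ivl T x0 \<longleftrightarrow> T \<le> x \<and> ereal x < x0"
  by (simp add: ivl_def)

lemma ivl_between: "c \<in> ivl T x0 \<Longrightarrow> d \<in> ivl T x0 \<Longrightarrow> c \<le> z \<Longrightarrow> z \<le> d \<Longrightarrow> z \<in> ivl T x0"
proof -
  assume c: "c \<in> ivl T x0" and d: "d \<in> ivl T x0" and z: "c \<le> z" "z \<le> d"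
  have "ereal z \<le> ereal d" using z by simp
  moreover have "ereal d < x0" using d by (simp add: ivl_def)
  ultimately have "ereal z < x0" by (rule le_less_trans)
  moreover have "T \<le> z" using c z by (simp add: ivl_def)
  ultimately show ?thesis by (simp add: ivl_def)
qed

lemma ivl_Icc: "c \<in> ivl T x0 \<Longrightarrow> d \<in> ivl T x0 \<Longrightarrow> {c..d} \<subseteq> ivl T x0"
proof
  fix z assume "c \<in> ivl T x0" "d \<in> ivl T x0" "z \<in> {c..d}"
  then show "z \<in> ivl T x0" using ivl_between[of c T x0 d z] by auto
qed

lemma ivl_right: "x \<in> ivl T x0 \<Longrightarrow> \<exists>y. x < y \<and> y \<in> ivl T x0"
proof -
  assume x: "x \<in> ivl T x0"
  then have "ereal x < x0" by (simp add: ivl_def)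
  then obtain z where z: "ereal x < z" "z < x0" using dense by blast
  then obtain y where "z = ereal y" using x by (cases z) auto
  then show ?thesis using z x by (intro exI[of _ y]) (auto simp: ivl_def)
qed

lemma ivl_not_bot: "x \<in> ivl T x0 \<Longrightarrow> at x within ivl T x0 \<noteq> bot"
proof -
  assume x: "x \<in> ivl T x0"
  obtain y where y: "x < y" "y \<in> ivl T x0" using ivl_right[OF x] by blast
  have "{x..y} \<subseteq> ivl T x0" using ivl_Icc[OF x y(2)] .
  then have "at x within {x..y} \<le> at x within ivl T x0" by (rule at_le)
  moreover have "at x within {x..y} = at_right x" using y(1) by (rule at_within_Icc_at_right)
  ultimately show ?thesis by (metis bot.extremum_uniqueI trivial_limit_at_right_real)
qed

lemma to_x0_not_bot: "ereal T < x0 \<Longrightarrow> to_x0 x0 \<noteq> bot"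
proof -
  assume T: "ereal T < x0"
  show ?thesis
  proof (cases x0)
    case (real r) then show ?thesis using T by (simp add: to_x0_def)
  qed (use T in \<open>auto simp: to_x0_def\<close>)
qed

lemma to_x0_thr:
  assumes T: "ereal T < x0" and ev: "eventually P (to_x0 x0)"
  shows "\<exists>c\<in>ivl T x0. \<forall>x\<in>ivl T x0. c \<le> x \<longrightarrow> P x"
proof (cases x0)
  case (real r)
  then have Tr: "T < r" using T by simp
  then have "eventually P (at_left r)" using ev real by (simp add: to_x0_def)
  then obtain b where b: "b < r" "\<forall>y>b. y < r \<longrightarrow> P y" using Tr eventually_at_left[of T r P] by blast
  define c where "c = max T ((b + r)/2)"
  have c: "c \<in> ivl T x0" using b Tr real by (auto simp: c_def ivl_def)
  have "\<forall>x\<in>ivl T x0. c \<le> x \<longrightarrow> P x"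
  proof (intro ballI impI)
    fix x assume x: "x \<in> ivl T x0" "c \<le> x"
    then have "x < r" using real by (simp add: ivl_def)
    moreover have "(b + r)/2 \<le> x" using x(2) unfolding c_def by simp
    then have "b < x" using b(1) by (simp add: field_simps)
    ultimately show "P x" using b(2) by blast
  qed
  then show ?thesis using c by blast
next
  case PInf
  then have "eventually P at_top" using ev by (simp add: to_x0_def)
  then obtain N where N: "\<forall>n\<ge>N. P n" by (auto simp: eventually_at_top_linorder)
  have "max N T \<in> ivl T x0" using PInf by (simp add: ivl_def)
  moreover have "\<forall>x\<in>ivl T x0. max N T \<le> x \<longrightarrow> P x" using N by auto
  ultimately show ?thesis by blast
next
  case MInf then show ?thesis using T by simp
qed

lemma to_x0_ge:
  assumes T: "ereal T < x0" and c: "c \<in> ivl T x0"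
  shows "eventually (\<lambda>x. x \<in> ivl T x0 \<and> c \<le> x) (to_x0 x0)"
proof (cases x0)
  case (real r)
  then have cr: "c < r" using c by (simp add: ivl_def)
  have "eventually (\<lambda>x. x \<in> {c<..<r}) (at_left r)" using cr by (rule eventually_at_left_real)
  then show ?thesis using real c
    by (auto simp: to_x0_def ivl_def elim!: eventually_mono)
next
  case PInf
  have "eventually (\<lambda>x. c \<le> x) at_top" by (rule eventually_ge_at_top)
  then have "eventually (\<lambda>x. x \<in> ivl T x0 \<and> c \<le> x) at_top"
    by (rule eventually_mono) (use c PInf in \<open>auto simp: ivl_def\<close>)
  then show ?thesis using PInf by (simp add: to_x0_def)
next
  case MInf then show ?thesis using T by simp
qed

lemma to_x0_in: "ereal T < x0 \<Longrightarrow> eventually (\<lambda>x. x \<in> ivl T x0) (to_x0 x0)"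
  using to_x0_ge[of T x0 T] by (auto simp: ivl_def elim: eventually_mono)

lemma abs_cont_on_lip:
  assumes "\<And>x y. x \<in> {c..d} \<Longrightarrow> y \<in> {c..d} \<Longrightarrow> \<bar>g y - g x\<bar> \<le> L * \<bar>y - x\<bar>" and L: "L \<ge> 0"
  shows "abs_cont_on g c d"
  unfolding abs_cont_on_def
proof (intro allI impI)
  fix e :: real assume e: "e > 0"
  show "\<exists>\<delta>>0. \<forall>(n::nat) a b. (\<forall>k<n. c \<le> a k \<and> a k \<le> b k \<and> b k \<le> d) \<and>
        (\<forall>k. Suc k < n \<longrightarrow> b k \<le> a (Suc k)) \<and>
        (\<Sum>k<n. b k - a k) < \<delta> \<longrightarrow> (\<Sum>k<n. \<bar>g (b k) - g (a k)\<bar>) < e"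
  proof (intro exI[of _ "e / (L + 1)"] conjI allI impI)
    show "e / (L + 1) > 0" using e L by simp
    fix n :: nat and a b :: "nat \<Rightarrow> real"
    assume H: "(\<forall>k<n. c \<le> a k \<and> a k \<le> b k \<and> b k \<le> d) \<and> (\<forall>k. Suc k < n \<longrightarrow> b k \<le> a (Suc k)) \<and>
        (\<Sum>k<n. b k - a k) < e / (L + 1)"
    have "(\<Sum>k<n. \<bar>g (b k) - g (a k)\<bar>) \<le> (\<Sum>k<n. L * (b k - a k))"
    proof (rule sum_mono)
      fix k assume "k \<in> {..<n}"
      then have k: "c \<le> a k" "a k \<le> b k" "b k \<le> d" using H by auto
      then show "\<bar>g (b k) - g (a k)\<bar> \<le> L * (b k - a k)" using assms(1)[of "a k" "b k"] by auto
    qed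
    also have "\<dots> = L * (\<Sum>k<n. b k - a k)" by (simp add: sum_distrib_left)
    also have "\<dots> \<le> L * (e / (L + 1))" using H L by (intro mult_left_mono) auto
    also have "\<dots> < e" using e L by (simp add: field_simps)
    finally show "(\<Sum>k<n. \<bar>g (b k) - g (a k)\<bar>) < e" .
  qed
qed

lemma abs_cont_on_bounded:
  assumes AC: "abs_cont_on f c d" and cd: "c \<le> d"
  shows "\<exists>M. \<forall>x\<in>{c..d}. \<bar>f x\<bar> \<le> M"
proof -
  have "continuous_on {c..d} f"
    unfolding continuous_on_iff
  proof (intro ballI allI impI)
    fix x and e :: real assume x: "x \<in> {c..d}" and e: "e > 0"
    obtain \<delta> where d: "\<delta> > 0" "\<And>x y. c \<le> x \<Longrightarrow> x \<le> y \<Longrightarrow> y \<le> d \<Longrightarrow> y - x < \<delta> \<Longrightarrow> \<bar>f y - f x\<bar> < e"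
      using AC_cont[OF AC e] by blast
    have "\<forall>x'\<in>{c..d}. dist x' x < \<delta> \<longrightarrow> dist (f x') (f x) < e"
    proof (intro ballI impI)
      fix x' assume x': "x' \<in> {c..d}" "dist x' x < \<delta>"
      show "dist (f x') (f x) < e"
      proof (cases "x \<le> x'")
        case True then show ?thesis using d(2)[of x x'] x x' by (auto simp: dist_real_def)
      next
        case False then show ?thesis using d(2)[of x' x] x x' by (auto simp: dist_real_def abs_minus_commute)
      qed
    qed
    then show "\<exists>\<delta>'>0. \<forall>x'\<in>{c..d}. dist x' x < \<delta>' \<longrightarrow> dist (f x') (f x) < e" using d(1) by blast
  qed
  then have "compact (f ` {c..d})" by (rule compact_continuous_image) simp
  then obtain M where "\<forall>y\<in>f ` {c..d}. norm y \<le> M" using compact_imp_bounded bounded_iff by metis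
  then show ?thesis by auto
qed

lemma abs_cont_on_mult:
  assumes F: "abs_cont_on f c d" and G: "abs_cont_on g c d" and cd: "c \<le> d"
  shows "abs_cont_on (\<lambda>x. f x * g x) c d"
proof -
  obtain Mf where Mf: "\<forall>x\<in>{c..d}. \<bar>f x\<bar> \<le> Mf" using abs_cont_on_bounded[OF F cd] by blast
  obtain Mg where Mg: "\<forall>x\<in>{c..d}. \<bar>g x\<bar> \<le> Mg" using abs_cont_on_bounded[OF G cd] by blast
  have Mf0: "Mf \<ge> 0" using Mf cd by force
  have Mg0: "Mg \<ge> 0" using Mg cd by force
  show ?thesis unfolding abs_cont_on_def
  proof (intro allI impI)
    fix e :: real assume e: "e > 0"
    define e1 where "e1 = e / (2 * (Mg + 1))"
    define e2 where "e2 = e / (2 * (Mf + 1))"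
    have e12: "e1 > 0" "e2 > 0" using e Mf0 Mg0 by (auto simp: e1_def e2_def)
    obtain d1 where d1: "d1 > 0" and H1: "\<forall>(n::nat) a b. (\<forall>k<n. c \<le> a k \<and> a k \<le> b k \<and> b k \<le> d) \<and>
        (\<forall>k. Suc k < n \<longrightarrow> b k \<le> a (Suc k)) \<and>
        (\<Sum>k<n. b k - a k) < d1 \<longrightarrow> (\<Sum>k<n. \<bar>f (b k) - f (a k)\<bar>) < e1"
      using F[unfolded abs_cont_on_def, rule_format, OF e12(1)] by (elim exE conjE)
    obtain d2 where d2: "d2 > 0" and H2: "\<forall>(n::nat) a b. (\<forall>k<n. c \<le> a k \<and> a k \<le> b k \<and> b k \<le> d) \<and>
        (\<forall>k. Suc k < n \<longrightarrow> b k \<le> a (Suc k)) \<and>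
        (\<Sum>k<n. b k - a k) < d2 \<longrightarrow> (\<Sum>k<n. \<bar>g (b k) - g (a k)\<bar>) < e2"
      using G[unfolded abs_cont_on_def, rule_format, OF e12(2)] by (elim exE conjE)
    show "\<exists>\<delta>>0. \<forall>(n::nat) a b. (\<forall>k<n. c \<le> a k \<and> a k \<le> b k \<and> b k \<le> d) \<and>
        (\<forall>k. Suc k < n \<longrightarrow> b k \<le> a (Suc k)) \<and>
        (\<Sum>k<n. b k - a k) < \<delta> \<longrightarrow> (\<Sum>k<n. \<bar>f (b k) * g (b k) - f (a k) * g (a k)\<bar>) < e"
    proof (intro exI[of _ "min d1 d2"] conjI allI impI)
      show "min d1 d2 > 0" using d1 d2 by simp
      fix n :: nat and a b :: "nat \<Rightarrow> real"
      assume H: "(\<forall>k<n. c \<le> a k \<and> a k \<le> b k \<and> b k \<le> d) \<and> (\<forall>k. Suc k < n \<longrightarrow> b k \<le> a (Suc k)) \<and>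
        (\<Sum>k<n. b k - a k) < min d1 d2"
      have sf: "(\<Sum>k<n. \<bar>f (b k) - f (a k)\<bar>) < e1" using H1 H by auto
      have sg: "(\<Sum>k<n. \<bar>g (b k) - g (a k)\<bar>) < e2" using H2 H by auto
      have "(\<Sum>k<n. \<bar>f (b k) * g (b k) - f (a k) * g (a k)\<bar>)
          \<le> (\<Sum>k<n. Mf * \<bar>g (b k) - g (a k)\<bar> + Mg * \<bar>f (b k) - f (a k)\<bar>)"
      proof (rule sum_mono)
        fix k assume "k \<in> {..<n}"
        then have k: "a k \<in> {c..d}" "b k \<in> {c..d}" using H by auto
        have "f (b k) * g (b k) - f (a k) * g (a k) = f (b k) * (g (b k) - g (a k)) + g (a k) * (f (b k) - f (a k))"
          by (simp add: algebra_simps)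
        then have "\<bar>f (b k) * g (b k) - f (a k) * g (a k)\<bar> \<le> \<bar>f (b k)\<bar> * \<bar>g (b k) - g (a k)\<bar> + \<bar>g (a k)\<bar> * \<bar>f (b k) - f (a k)\<bar>"
          by (metis abs_mult abs_triangle_ineq)
        also have "\<dots> \<le> Mf * \<bar>g (b k) - g (a k)\<bar> + Mg * \<bar>f (b k) - f (a k)\<bar>"
          using Mf Mg k by (intro add_mono mult_right_mono) auto
        finally show "\<bar>f (b k) * g (b k) - f (a k) * g (a k)\<bar> \<le> Mf * \<bar>g (b k) - g (a k)\<bar> + Mg * \<bar>f (b k) - f (a k)\<bar>" .
      qed
      also have "\<dots> = Mf * (\<Sum>k<n. \<bar>g (b k) - g (a k)\<bar>) + Mg * (\<Sum>k<n. \<bar>f (b k) - f (a k)\<bar>)"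
        by (simp add: sum.distrib sum_distrib_left)
      also have "\<dots> \<le> Mf * e2 + Mg * e1"
        using sf sg Mf0 Mg0 by (intro add_mono mult_left_mono) auto
      also have "\<dots> < e"
      proof -
        have "Mf * e2 \<le> e/2" using Mf0 e by (simp add: e2_def field_simps)
        moreover have "Mg * e1 \<le> e/2" using Mg0 e by (simp add: e1_def field_simps)
        moreover have "Mf * e2 < e/2 \<or> Mg * e1 < e/2"
          using Mf0 e by (simp add: e2_def field_simps)
        ultimately show ?thesis by linarith
      qed
      finally show "(\<Sum>k<n. \<bar>f (b k) * g (b k) - f (a k) * g (a k)\<bar>) < e" .
    qed
  qed
qed

lemma abs_cont_on_diff:
  assumes F: "abs_cont_on f c d" and G: "abs_cont_on g c d"
  shows "abs_cont_on (\<lambda>x. f x - g x) c d"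
  unfolding abs_cont_on_def
proof (intro allI impI)
  fix e :: real assume e: "e > 0"
  obtain d1 where d1: "d1 > 0" and H1: "\<forall>(n::nat) a b. (\<forall>k<n. c \<le> a k \<and> a k \<le> b k \<and> b k \<le> d) \<and>
      (\<forall>k. Suc k < n \<longrightarrow> b k \<le> a (Suc k)) \<and>
      (\<Sum>k<n. b k - a k) < d1 \<longrightarrow> (\<Sum>k<n. \<bar>f (b k) - f (a k)\<bar>) < e/2"
    using F[unfolded abs_cont_on_def, rule_format, of "e/2"] e by (auto elim!: exE)
  obtain d2 where d2: "d2 > 0" and H2: "\<forall>(n::nat) a b. (\<forall>k<n. c \<le> a k \<and> a k \<le> b k \<and> b k \<le> d) \<and>
      (\<forall>k. Suc k < n \<longrightarrow> b k \<le> a (Suc k)) \<and>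
      (\<Sum>k<n. b k - a k) < d2 \<longrightarrow> (\<Sum>k<n. \<bar>g (b k) - g (a k)\<bar>) < e/2"
    using G[unfolded abs_cont_on_def, rule_format, of "e/2"] e by (auto elim!: exE)
  show "\<exists>\<delta>>0. \<forall>(n::nat) a b. (\<forall>k<n. c \<le> a k \<and> a k \<le> b k \<and> b k \<le> d) \<and>
      (\<forall>k. Suc k < n \<longrightarrow> b k \<le> a (Suc k)) \<and>
      (\<Sum>k<n. b k - a k) < \<delta> \<longrightarrow> (\<Sum>k<n. \<bar>(f (b k) - g (b k)) - (f (a k) - g (a k))\<bar>) < e"
  proof (intro exI[of _ "min d1 d2"] conjI allI impI)
    show "min d1 d2 > 0" using d1 d2 by simp
    fix n :: nat and a b :: "nat \<Rightarrow> real"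
    assume H: "(\<forall>k<n. c \<le> a k \<and> a k \<le> b k \<and> b k \<le> d) \<and> (\<forall>k. Suc k < n \<longrightarrow> b k \<le> a (Suc k)) \<and>
      (\<Sum>k<n. b k - a k) < min d1 d2"
    have sf: "(\<Sum>k<n. \<bar>f (b k) - f (a k)\<bar>) < e/2" using H1 H by auto
    have sg: "(\<Sum>k<n. \<bar>g (b k) - g (a k)\<bar>) < e/2" using H2 H by auto
    have "(\<Sum>k<n. \<bar>(f (b k) - g (b k)) - (f (a k) - g (a k))\<bar>) \<le> (\<Sum>k<n. \<bar>f (b k) - f (a k)\<bar> + \<bar>g (b k) - g (a k)\<bar>)"
      by (rule sum_mono) linarith
    also have "\<dots> < e" using sf sg by (simp add: sum.distrib)
    finally show "(\<Sum>k<n. \<bar>(f (b k) - g (b k)) - (f (a k) - g (a k))\<bar>) < e" .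
  qed
qed

lemma abs_cont_on_cong: "abs_cont_on f c d \<Longrightarrow> (\<And>x. x \<in> {c..d} \<Longrightarrow> f x = g x) \<Longrightarrow> abs_cont_on g c d"
  unfolding abs_cont_on_def
proof (intro allI impI)
  fix e :: real assume F: "\<forall>e>0. \<exists>\<delta>>0. \<forall>(n::nat) a b. (\<forall>k<n. c \<le> a k \<and> a k \<le> b k \<and> b k \<le> d) \<and>
      (\<forall>k. Suc k < n \<longrightarrow> b k \<le> a (Suc k)) \<and>
      (\<Sum>k<n. b k - a k) < \<delta> \<longrightarrow> (\<Sum>k<n. \<bar>f (b k) - f (a k)\<bar>) < e"
    and eq: "\<And>x. x \<in> {c..d} \<Longrightarrow> f x = g x" and e: "e > 0"
  obtain \<delta> where d: "\<delta> > 0" and H: "\<forall>(n::nat) a b. (\<forall>k<n. c \<le> a k \<and> a k \<le> b k \<and> b k \<le> d) \<and>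
      (\<forall>k. Suc k < n \<longrightarrow> b k \<le> a (Suc k)) \<and>
      (\<Sum>k<n. b k - a k) < \<delta> \<longrightarrow> (\<Sum>k<n. \<bar>f (b k) - f (a k)\<bar>) < e" using F e by blast
  show "\<exists>\<delta>>0. \<forall>(n::nat) a b. (\<forall>k<n. c \<le> a k \<and> a k \<le> b k \<and> b k \<le> d) \<and>
      (\<forall>k. Suc k < n \<longrightarrow> b k \<le> a (Suc k)) \<and>
      (\<Sum>k<n. b k - a k) < \<delta> \<longrightarrow> (\<Sum>k<n. \<bar>g (b k) - g (a k)\<bar>) < e"
  proof (intro exI[of _ \<delta>] conjI allI impI)
    fix n :: nat and a b :: "nat \<Rightarrow> real"
    assume H': "(\<forall>k<n. c \<le> a k \<and> a k \<le> b k \<and> b k \<le> d) \<and> (\<forall>k. Suc k < n \<longrightarrow> b k \<le> a (Suc k)) \<and>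
      (\<Sum>k<n. b k - a k) < \<delta>"
    have "(\<Sum>k<n. \<bar>g (b k) - g (a k)\<bar>) = (\<Sum>k<n. \<bar>f (b k) - f (a k)\<bar>)"
      by (rule sum.cong) (use H' eq in auto)
    then show "(\<Sum>k<n. \<bar>g (b k) - g (a k)\<bar>) < e" using H H' by auto
  qed (use d in auto)
qed

lemma C1_AC:
  assumes der: "\<And>x. x \<in> S \<Longrightarrow> (g has_real_derivative g' x) (at x within S)"
    and cont: "continuous_on S g'" and sub: "{c..d} \<subseteq> S"
  shows "abs_cont_on g c d"
proof -
  have "compact (g' ` {c..d})" using continuous_on_subset[OF cont sub] by (intro compact_continuous_image) auto
  then obtain B where B: "\<forall>y\<in>g' ` {c..d}. norm y \<le> B" using compact_imp_bounded bounded_iff by metis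
  have B0: "\<bar>g' x\<bar> \<le> max B 0" if "x \<in> {c..d}" for x
  proof -
    have "norm (g' x) \<le> B" using B that by blast
    then show ?thesis by simp
  qed
  show ?thesis
  proof (rule abs_cont_on_lip[of _ _ _ "max B 0"])
    fix x y assume xy: "x \<in> {c..d}" "y \<in> {c..d}"
    have "norm (g y - g x) \<le> max B 0 * norm (y - x)"
    proof (rule field_differentiable_bound[of "{c..d}"])
      show "convex {c..d}" by simp
      fix z assume z: "z \<in> {c..d}"
      show "(g has_field_derivative g' z) (at z within {c..d})" using der[of z] sub z DERIV_subset by blast
      show "norm (g' z) \<le> max B 0" using B0[OF z] by simp
    qed (use xy in auto)
    then show "\<bar>g y - g x\<bar> \<le> max B 0 * \<bar>y - x\<bar>" by simp
  qed simp
qed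

lemma const_sign:
  fixes w :: "real \<Rightarrow> real"
  assumes cont: "continuous_on S w" and nz: "\<And>x. x \<in> S \<Longrightarrow> w x \<noteq> 0"
    and conv: "\<And>a b z. a \<in> S \<Longrightarrow> b \<in> S \<Longrightarrow> a \<le> z \<Longrightarrow> z \<le> b \<Longrightarrow> z \<in> S"
    and a: "a \<in> S" and b: "b \<in> S" and wa: "w a > 0"
  shows "w b > 0"
proof (rule ccontr)
  assume "\<not> w b > 0"
  then have wb: "w b < 0" using nz[OF b] by linarith
  have m1: "min a b \<in> S" using a b by (simp add: min_def)
  have m2: "max a b \<in> S" using a b by (simp add: max_def)
  have sub: "{min a b..max a b} \<subseteq> S" using conv[OF m1 m2] by auto
  have c: "continuous_on {min a b..max a b} w" using continuous_on_subset[OF cont sub] .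
  obtain z where z: "min a b \<le> z" "z \<le> max a b" "w z = 0"
  proof (cases "a \<le> b")
    case True
    then have mm: "min a b = a" "max a b = b" by auto
    obtain z where "a \<le> z" "z \<le> b" "w z = 0"
      using IVT2'[of w b 0 a, OF _ _ True] c wb wa unfolding mm by auto
    then show ?thesis using that unfolding mm by blast
  next
    case False
    then have ba: "b \<le> a" by simp
    then have mm: "min a b = b" "max a b = a" by auto
    obtain z where "b \<le> z" "z \<le> a" "w z = 0"
      using IVT'[of w b 0 a, OF _ _ ba] c wb wa unfolding mm by auto
    then show ?thesis using that unfolding mm by blast
  qed
  then show False using nz sub by auto
qed

theorem theorem4p3:
  fixes T :: real and x0 :: ereal and phi1 phi2 f :: "real \<Rightarrow> real"
  defines "I \<equiv> ivl T x0"
  defines "F \<equiv> to_x0 x0"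
  defines "D \<equiv> {x \<in> I. f differentiable (at x within I)}"
  defines "FD \<equiv> inf F (principal D)"
  defines "W \<equiv> Wr I phi1 phi2"
  defines "f1s \<equiv> (\<lambda>t. Wr I f phi2 t / W t)"
  defines "q \<equiv> dI I (\<lambda>t. phi1 t / phi2 t)"
  defines "g' \<equiv> dI I (\<lambda>t. f t / phi2 t)"
  assumes T_x0: "ereal T < x0"
    and phi1_diff: "\<forall>x\<in>I. phi1 differentiable (at x within I)"
    and phi2_diff: "\<forall>x\<in>I. phi2 differentiable (at x within I)"
    and phi1_C1: "continuous_on I (dI I phi1)"
    and phi2_C1: "continuous_on I (dI I phi2)"
    and phi2_small: "phi2 \<in> o[F](phi1)"
    and phi1_nz: "\<forall>x\<in>I. phi1 x \<noteq> 0"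
    and phi2_nz: "\<forall>x\<in>I. phi2 x \<noteq> 0"
    and W_nz: "\<forall>x\<in>I. W x \<noteq> 0"
    and f_AC: "AC_loc T x0 f"
  shows
    "(\<forall>x\<in>D. ((\<lambda>t. f t / phi2 t) has_real_derivative (q x * f1s x)) (at x within I))
     \<and> (\<forall>a1::real.
          ((f1s \<longlongrightarrow> a1) FD
             \<longleftrightarrow> (\<lambda>x. g' x - a1 * q x) \<in> o[FD](q))
        \<and> ((\<lambda>x. g' x - a1 * q x) \<in> o[FD](q)
             \<longleftrightarrow> ((\<lambda>x. f x - a1 * phi1 x) \<in> o[F](phi1)
                  \<and> (\<lambda>x. g' x - a1 * q x) \<in> o[FD](q))))
     \<and> (\<forall>a1::real.
          ((f1s \<longlongrightarrow> a1) FD \<and> imp_conv x0 T (\<lambda>t. q t * (f1s t - a1)))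
          \<longleftrightarrow> (\<exists>a2::real. (\<lambda>x. f x - a1 * phi1 x - a2 * phi2 x) \<in> o[F](phi2)
                      \<and> (\<lambda>x. g' x - a1 * q x) \<in> o[FD](q)))
     \<and> (\<forall>a1 a2::real.
          ((f1s \<longlongrightarrow> a1) FD \<and> imp_conv x0 T (\<lambda>t. q t * (f1s t - a1))
           \<and> (\<lambda>x. f x - a1 * phi1 x - a2 * phi2 x) \<in> o[F](phi2)
           \<and> (\<lambda>x. g' x - a1 * q x) \<in> o[FD](q))
          \<longrightarrow> (\<forall>x\<in>I. f x = a1 * phi1 x + a2 * phi2 x
                         - phi2 x * imp_int x0 x (\<lambda>t. q t * (f1s t - a1))))"
proof -
  have TI: "T \<in> I" using T_x0 by (simp add: I_def ivl_def)
  have nbot: "\<And>x. x \<in> I \<Longrightarrow> at x within I \<noteq> bot" unfolding I_def by (rule ivl_not_bot)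
  have Fnb: "F \<noteq> bot" unfolding F_def by (rule to_x0_not_bot[OF T_x0])
  have evI: "eventually (\<lambda>x. x \<in> I) F" unfolding F_def I_def by (rule to_x0_in[OF T_x0])
  have thr: "\<And>P. eventually P F \<Longrightarrow> \<exists>c\<in>I. \<forall>x\<in>I. c \<le> x \<longrightarrow> P x"
    unfolding F_def I_def by (rule to_x0_thr[OF T_x0])
  have ge: "\<And>c. c \<in> I \<Longrightarrow> eventually (\<lambda>x. x \<in> I \<and> c \<le> x) F"
    unfolding F_def I_def by (rule to_x0_ge[OF T_x0])
  have Icc: "\<And>c d. c \<in> I \<Longrightarrow> d \<in> I \<Longrightarrow> {c..d} \<subseteq> I" unfolding I_def by (rule ivl_Icc)
  have conv: "\<And>a b z. a \<in> I \<Longrightarrow> b \<in> I \<Longrightarrow> a \<le> z \<Longrightarrow> z \<le> b \<Longrightarrow> z \<in> I"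
    unfolding I_def by (rule ivl_between)
  define p1 where "p1 = dI I phi1"
  define p2 where "p2 = dI I phi2"
  define df where "df = dI I f"
  have der_of: "((h::real\<Rightarrow>real) has_real_derivative dI I h x) (at x within I)" if "h differentiable (at x within I)" for h x
    using that unfolding dI_def by (simp add: vector_derivative_works has_real_derivative_iff_has_vector_derivative)
  have dI_eq: "dI I h x = y" if "x \<in> I" "((h::real\<Rightarrow>real) has_real_derivative y) (at x within I)" for h x y
    unfolding dI_def using vector_derivative_within[OF nbot[OF that(1)]] that(2)
    by (simp add: has_real_derivative_iff_has_vector_derivative)
  have d1: "\<And>x. x \<in> I \<Longrightarrow> (phi1 has_real_derivative p1 x) (at x within I)"
    unfolding p1_def using phi1_diff der_of by blast
  have d2: "\<And>x. x \<in> I \<Longrightarrow> (phi2 has_real_derivative p2 x) (at x within I)"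
    unfolding p2_def using phi2_diff der_of by blast
  have dfD: "\<And>x. x \<in> D \<Longrightarrow> (f has_real_derivative df x) (at x within I)"
    unfolding df_def D_def using der_of by blast
  have Wx: "W x = phi1 x * p2 x - p1 x * phi2 x" for x
    unfolding W_def Wr_def p1_def p2_def by simp
  have f1sx: "f1s x = (f x * p2 x - df x * phi2 x) / W x" for x
    unfolding f1s_def Wr_def p2_def df_def by simp
  define r where "r = (\<lambda>t. phi1 t / phi2 t)"
  have rder0: "(r has_real_derivative (- W x / (phi2 x)^2)) (at x within I)" if x: "x \<in> I" for x
  proof -
    have "(r has_real_derivative (p1 x * phi2 x - phi1 x * p2 x) / (phi2 x * phi2 x)) (at x within I)"
      unfolding r_def using d1[OF x] d2[OF x] phi2_nz x by (intro DERIV_divide) auto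
    moreover have "(p1 x * phi2 x - phi1 x * p2 x) / (phi2 x * phi2 x) = - W x / (phi2 x)^2"
      by (simp add: Wx power2_eq_square algebra_simps)
    ultimately show ?thesis by simp
  qed
  have qx: "q x = - W x / (phi2 x)^2" if x: "x \<in> I" for x
    unfolding q_def using dI_eq[OF x rder0[OF x, unfolded r_def]] by simp
  have rder: "(r has_real_derivative q x) (at x within I)" if x: "x \<in> I" for x
    using rder0[OF x] qx[OF x] by simp
  have qnz: "q x \<noteq> 0" if x: "x \<in> I" for x using qx[OF x] W_nz phi2_nz x by simp
  have gder: "((\<lambda>t. f t / phi2 t) has_real_derivative (q x * f1s x)) (at x within I)" if x: "x \<in> D" for x
  proof -
    have xI: "x \<in> I" using x unfolding D_def by simp
    have "((\<lambda>t. f t / phi2 t) has_real_derivative (df x * phi2 x - f x * p2 x) / (phi2 x * phi2 x)) (at x within I)"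
      using dfD[OF x] d2[OF xI] phi2_nz xI by (intro DERIV_divide) auto
    moreover have "(df x * phi2 x - f x * p2 x) / (phi2 x * phi2 x) = q x * f1s x"
      using W_nz xI phi2_nz by (simp add: qx[OF xI] f1sx power2_eq_square field_simps)
    ultimately show ?thesis by simp
  qed
  have g'x: "g' x = q x * f1s x" if x: "x \<in> D" for x
  proof -
    have xI: "x \<in> I" using x unfolding D_def by simp
    show ?thesis unfolding g'_def by (rule dI_eq[OF xI gder[OF x]])
  qed
  have cphi1: "continuous_on I phi1"
    using d1 unfolding continuous_on_eq_continuous_within
    using DERIV_continuous by blast
  have cphi2: "continuous_on I phi2"
    using d2 unfolding continuous_on_eq_continuous_within
    using DERIV_continuous by blast
  have cW: "continuous_on I W"
    unfolding Wx[abs_def] p1_def p2_def by (intro continuous_intros cphi1 cphi2 phi1_C1 phi2_C1)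
  define \<sigma> :: real where "\<sigma> = (if W T > 0 then -1 else 1)"
  have sq: "\<sigma> * q x > 0" if x: "x \<in> I" for x
  proof (cases "W T > 0")
    case True
    have "W x > 0"
    proof (rule const_sign[of I W T x])
      show "continuous_on I W" by (rule cW)
      show "\<And>x. x \<in> I \<Longrightarrow> W x \<noteq> 0" using W_nz by blast
      show "\<And>a b z. a \<in> I \<Longrightarrow> b \<in> I \<Longrightarrow> a \<le> z \<Longrightarrow> z \<le> b \<Longrightarrow> z \<in> I" by (rule conv)
    qed (use TI x True in auto)
    then show ?thesis using True qx[OF x] phi2_nz x by (simp add: \<sigma>_def divide_pos_pos)
  next
    case False
    then have WT: "- W T > 0" using W_nz TI by (simp add: less_le)
    have "- W x > 0"
    proof (rule const_sign[of I "\<lambda>x. - W x" T x])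
      show "continuous_on I (\<lambda>x. - W x)" by (rule continuous_on_minus[OF cW])
      show "\<And>x. x \<in> I \<Longrightarrow> - W x \<noteq> 0" using W_nz by simp
      show "\<And>a b z. a \<in> I \<Longrightarrow> b \<in> I \<Longrightarrow> a \<le> z \<Longrightarrow> z \<le> b \<Longrightarrow> z \<in> I" by (rule conv)
    qed (use TI x WT in auto)
    then show ?thesis using False qx[OF x] phi2_nz x by (simp add: \<sigma>_def divide_neg_pos)
  qed
  have \<sigma>abs: "\<bar>\<sigma>\<bar> = 1" by (simp add: \<sigma>_def)
  have absq: "\<bar>q x\<bar> = \<sigma> * q x" if x: "x \<in> I" for x
    using sq[OF x] \<sigma>abs by (cases "\<sigma> = 1") (auto simp: \<sigma>_def split: if_splits)
  have qint: "(q has_integral (r d - r c)) {c..d}" if cd: "c \<in> I" "d \<in> I" "c \<le> d" for c d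
  proof (rule fundamental_theorem_of_calculus[OF cd(3)])
    fix x assume x: "x \<in> {c..d}"
    then have xI: "x \<in> I" using Icc[OF cd(1,2)] by auto
    show "(r has_vector_derivative q x) (at x within {c..d})"
      using DERIV_subset[OF rder[OF xI] Icc[OF cd(1,2)]] by (simp add: has_real_derivative_iff_has_vector_derivative)
  qed
  define U where "U a1 t = f t / phi2 t - a1 * r t" for a1 t
  define H where "H a1 t = q t * (f1s t - a1)" for a1 t
  have fAC: "abs_cont_on f c d" if "c \<in> I" "d \<in> I" "c \<le> d" for c d
    using f_AC that unfolding AC_loc_def I_def by blast
  have UAC: "abs_cont_on (U a1) c d" if cd: "c \<in> I" "d \<in> I" "c \<le> d" for a1 c d
  proof -
    have AC1: "abs_cont_on phi1 c d" by (rule C1_AC[OF d1 phi1_C1[folded p1_def] Icc[OF cd(1,2)]])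
    have dinv: "((\<lambda>t. 1 / phi2 t) has_real_derivative (- p2 x / (phi2 x * phi2 x))) (at x within I)" if x: "x \<in> I" for x
      using DERIV_divide[OF DERIV_const d2[OF x], of 1] phi2_nz x by simp
    have cinv: "continuous_on I (\<lambda>x. - p2 x / (phi2 x * phi2 x))"
      unfolding p2_def using phi2_nz by (intro continuous_intros phi2_C1 cphi2) auto
    have AC2: "abs_cont_on (\<lambda>t. 1 / phi2 t) c d" by (rule C1_AC[OF dinv cinv Icc[OF cd(1,2)]])
    have AC3: "abs_cont_on (\<lambda>t. a1 * phi1 t) c d"
      by (rule abs_cont_on_mult[OF abs_cont_on_lip[of c d "\<lambda>_. a1" 0] AC1 cd(3)]) auto
    have "abs_cont_on (\<lambda>t. (f t - a1 * phi1 t) * (1 / phi2 t)) c d"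
      by (rule abs_cont_on_mult[OF abs_cont_on_diff[OF fAC[OF cd] AC3] AC2 cd(3)])
    moreover have "(\<lambda>t. (f t - a1 * phi1 t) * (1 / phi2 t)) = U a1"
      by (rule ext) (simp add: U_def r_def divide_inverse algebra_simps)
    ultimately show ?thesis by simp
  qed
  have Uder: "(U a1 has_real_derivative H a1 x) (at x within I)" if x: "x \<in> D" for a1 x
  proof -
    have xI: "x \<in> I" using x unfolding D_def by simp
    have "(U a1 has_real_derivative (q x * f1s x - a1 * q x)) (at x within I)"
      unfolding U_def by (intro DERIV_diff DERIV_cmult gder[OF x] rder[OF xI])
    then show ?thesis by (simp add: H_def algebra_simps)
  qed
  have negD: "negligible {t\<in>{c..d}. t \<notin> D}" if cd: "c \<in> I" "d \<in> I" "c \<le> d" for c d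
  proof -
    have "negligible {t\<in>{c..d}. \<not> f differentiable (at t)}" by (rule AC_diff_ae[OF fAC[OF cd] cd(3)])
    moreover have "{t\<in>{c..d}. t \<notin> D} \<subseteq> {t\<in>{c..d}. \<not> f differentiable (at t)}"
      using Icc[OF cd(1,2)] unfolding D_def by (auto intro: differentiable_at_withinI)
    ultimately show ?thesis by (rule negligible_subset)
  qed
  have K: "(H a1 has_integral (U a1 d - U a1 c)) {c..d}" if cd: "c \<in> I" "d \<in> I" "c \<le> d" for a1 c d
  proof (rule AC_FTC[OF UAC[OF cd] cd(3) negD[OF cd]])
    fix x assume "x \<in> {c..d} - {t\<in>{c..d}. t \<notin> D}"
    then have x: "x \<in> D" "x \<in> {c..d}" by auto
    show "(U a1 has_real_derivative H a1 x) (at x within {c..d})"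
      by (rule DERIV_subset[OF Uder[OF x(1)] Icc[OF cd(1,2)]])
  qed
  have UHD: "g' x - a1 * q x = H a1 x" if x: "x \<in> D" for a1 x
    using g'x[OF x] by (simp add: H_def algebra_simps)
  have evD: "eventually (\<lambda>x. x \<in> D) FD" unfolding FD_def eventually_inf_principal by simp
  have Ia: "(f1s \<longlongrightarrow> a1) FD \<longleftrightarrow> (\<lambda>x. g' x - a1 * q x) \<in> o[FD](q)" for a1
  proof
    assume lim: "(f1s \<longlongrightarrow> a1) FD"
    show "(\<lambda>x. g' x - a1 * q x) \<in> o[FD](q)"
    proof (rule landau_o.smallI)
      fix c :: real assume c: "c > 0"
      have "eventually (\<lambda>x. dist (f1s x) a1 < c) FD" using tendstoD[OF lim c] .
      with evD show "eventually (\<lambda>x. norm (g' x - a1 * q x) \<le> c * norm (q x)) FD"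
      proof eventually_elim
        case (elim x)
        have "g' x - a1 * q x = q x * (f1s x - a1)" using UHD[OF elim(1)] by (simp add: H_def)
        then have "norm (g' x - a1 * q x) = \<bar>q x\<bar> * \<bar>f1s x - a1\<bar>" by (simp add: abs_mult)
        also have "\<dots> \<le> \<bar>q x\<bar> * c" using elim(2) by (intro mult_left_mono) (auto simp: dist_real_def)
        finally show ?case by (simp add: mult.commute)
      qed
    qed
  next
    assume o: "(\<lambda>x. g' x - a1 * q x) \<in> o[FD](q)"
    show "(f1s \<longlongrightarrow> a1) FD"
    proof (rule tendstoI)
      fix \<epsilon> :: real assume \<epsilon>: "\<epsilon> > 0"
      have "eventually (\<lambda>x. norm (g' x - a1 * q x) \<le> (\<epsilon>/2) * norm (q x)) FD"
        by (rule landau_o.smallD[OF o]) (use \<epsilon> in simp)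
      with evD show "eventually (\<lambda>x. dist (f1s x) a1 < \<epsilon>) FD"
      proof eventually_elim
        case (elim x)
        have xI: "x \<in> I" using elim(1) unfolding D_def by simp
        have "g' x - a1 * q x = q x * (f1s x - a1)" using UHD[OF elim(1)] by (simp add: H_def)
        then have "\<bar>q x\<bar> * \<bar>f1s x - a1\<bar> \<le> \<bar>q x\<bar> * (\<epsilon>/2)" using elim(2) by (simp add: abs_mult mult.commute)
        then have "\<bar>f1s x - a1\<bar> \<le> \<epsilon>/2" using qnz[OF xI] by simp
        then show ?case using \<epsilon> by (simp add: dist_real_def)
      qed
    qed
  qed
  have rbig: "eventually (\<lambda>x. M \<le> \<bar>r x\<bar>) F" for M
  proof -
    define M' where "M' = max M 1"
    have M': "M' > 0" "M \<le> M'" by (auto simp: M'_def)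
    have "((\<lambda>x. phi2 x / phi1 x) \<longlongrightarrow> 0) F" by (rule smalloD_tendsto[OF phi2_small])
    then have "eventually (\<lambda>x. dist (phi2 x / phi1 x) 0 < 1 / M') F" using M' by (intro tendstoD) auto
    with evI show ?thesis
    proof eventually_elim
      case (elim x)
      let ?p = "phi2 x / phi1 x"
      have p0: "\<bar>?p\<bar> > 0" using phi1_nz phi2_nz elim(1) by simp
      have pr: "\<bar>?p\<bar> * \<bar>r x\<bar> = 1" using phi1_nz phi2_nz elim(1) by (simp add: r_def abs_mult[symmetric] mult.commute)
      have "\<bar>?p\<bar> < 1 / M'" using elim(2) by (simp only: dist_real_def diff_zero)
      then have "\<bar>?p\<bar> * M' < 1" using M'(1) by (simp add: less_divide_eq)
      then have "\<bar>?p\<bar> * M' < \<bar>?p\<bar> * \<bar>r x\<bar>" using pr by linarith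
      then have "M' < \<bar>r x\<bar>" using mult_less_cancel_left_pos[OF p0] by blast
      then show ?case using M' by simp
    qed
  qed
  have fU: "f x - a1 * phi1 x = phi2 x * U a1 x" if x: "x \<in> I" for a1 x
    using phi2_nz x by (simp add: U_def r_def field_simps)
  have phr: "phi1 x = phi2 x * r x" if x: "x \<in> I" for x
    using phi2_nz x by (simp add: r_def)
  have Ib: "(\<lambda>x. f x - a1 * phi1 x) \<in> o[F](phi1)" if o: "(\<lambda>x. g' x - a1 * q x) \<in> o[FD](q)" for a1
  proof (rule landau_o.smallI)
    fix \<epsilon> :: real assume \<epsilon>: "\<epsilon> > 0"
    define e where "e = \<epsilon>/2"
    have e: "e > 0" using \<epsilon> by (simp add: e_def)
    have "eventually (\<lambda>x. norm (g' x - a1 * q x) \<le> e * norm (q x)) FD"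
      using landau_o.smallD[OF o e] .
    then have "eventually (\<lambda>x. x \<in> D \<longrightarrow> \<bar>H a1 x\<bar> \<le> e * \<bar>q x\<bar>) F"
      unfolding FD_def eventually_inf_principal by (rule eventually_mono) (use UHD in auto)
    then obtain c where c: "c \<in> I" "\<And>x. x \<in> I \<Longrightarrow> c \<le> x \<Longrightarrow> x \<in> D \<Longrightarrow> \<bar>H a1 x\<bar> \<le> e * \<bar>q x\<bar>"
      using thr by blast
    have bnd: "\<bar>U a1 x - U a1 c\<bar> \<le> e * (\<bar>r x\<bar> + \<bar>r c\<bar>)" if x: "x \<in> I" "c \<le> x" for x
    proof -
      define Hh where "Hh t = (if t \<in> D then H a1 t else 0)" for t
      have Hi: "(Hh has_integral (U a1 x - U a1 c)) {c..x}"
        by (rule has_integral_spike[OF negD[OF c(1) x(1) x(2)] _ K[OF c(1) x]]) (auto simp: Hh_def)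
      have qi: "((\<lambda>t. (e * \<sigma>) * q t) has_integral ((e * \<sigma>) * (r x - r c))) {c..x}"
        by (rule has_integral_mult_right[OF qint[OF c(1) x]])
      have pt: "\<bar>Hh t\<bar> \<le> (e * \<sigma>) * q t" if t: "t \<in> {c..x}" for t
      proof -
        have tI: "t \<in> I" using t Icc[OF c(1) x(1)] by auto
        have "e * \<bar>q t\<bar> = (e * \<sigma>) * q t" using absq[OF tI] by simp
        moreover have "0 \<le> e * \<bar>q t\<bar>" using e by simp
        ultimately show ?thesis using c(2)[OF tI] t unfolding Hh_def by auto
      qed
      have l1: "U a1 x - U a1 c \<le> (e * \<sigma>) * (r x - r c)"
        by (rule has_integral_le[OF Hi qi]) (use pt in fastforce)
      have l2: "- (U a1 x - U a1 c) \<le> (e * \<sigma>) * (r x - r c)"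
        by (rule has_integral_le[OF has_integral_neg[OF Hi] qi]) (use pt in fastforce)
      have s1: "\<sigma> * (r x - r c) \<le> \<bar>\<sigma> * (r x - r c)\<bar>" by (rule abs_ge_self)
      have s2: "\<bar>\<sigma> * (r x - r c)\<bar> = \<bar>r x - r c\<bar>" using \<sigma>abs by (simp add: abs_mult)
      have "(e * \<sigma>) * (r x - r c) = e * (\<sigma> * (r x - r c))" by simp
      also have "\<dots> \<le> e * \<bar>r x - r c\<bar>" using s1 s2 e by (intro mult_left_mono) auto
      also have "\<dots> \<le> e * (\<bar>r x\<bar> + \<bar>r c\<bar>)" using e by (intro mult_left_mono) auto
      finally show ?thesis using l1 l2 by linarith
    qed
    have "eventually (\<lambda>x. (x \<in> I \<and> c \<le> x) \<and> (\<bar>U a1 c\<bar> + e * \<bar>r c\<bar>) / e \<le> \<bar>r x\<bar>) F"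
      using ge[OF c(1)] rbig by (rule eventually_conj)
    then show "eventually (\<lambda>x. norm (f x - a1 * phi1 x) \<le> \<epsilon> * norm (phi1 x)) F"
    proof eventually_elim
      case (elim x)
      have xI: "x \<in> I" and cx: "c \<le> x" using elim by auto
      have big: "\<bar>U a1 c\<bar> + e * \<bar>r c\<bar> \<le> e * \<bar>r x\<bar>" using elim e by (simp add: field_simps)
      have "\<bar>U a1 x\<bar> \<le> \<bar>U a1 c\<bar> + e * (\<bar>r x\<bar> + \<bar>r c\<bar>)" using bnd[OF xI cx] by linarith
      also have "\<dots> \<le> \<epsilon> * \<bar>r x\<bar>" using big by (simp add: e_def algebra_simps)
      finally have Ux: "\<bar>U a1 x\<bar> \<le> \<epsilon> * \<bar>r x\<bar>" .
      have "norm (f x - a1 * phi1 x) = \<bar>phi2 x\<bar> * \<bar>U a1 x\<bar>" using fU[OF xI] by (simp add: abs_mult)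
      also have "\<dots> \<le> \<bar>phi2 x\<bar> * (\<epsilon> * \<bar>r x\<bar>)" using Ux by (intro mult_left_mono) auto
      also have "\<dots> = \<epsilon> * norm (phi1 x)" using phr[OF xI] by (simp add: abs_mult)
      finally show ?case .
    qed
  qed
  have quot: "(f x - a1 * phi1 x - a2 * phi2 x) / phi2 x = U a1 x - a2" if x: "x \<in> I" for a1 a2 x
    using phi2_nz x by (simp add: U_def r_def field_simps)
  have evq: "eventually (\<lambda>x. (f x - a1 * phi1 x - a2 * phi2 x) / phi2 x = U a1 x - a2) F" for a1 a2
    using evI by (rule eventually_mono) (rule quot)
  have Ulim1: "(U a1 \<longlongrightarrow> a2) F" if o: "(\<lambda>x. f x - a1 * phi1 x - a2 * phi2 x) \<in> o[F](phi2)" for a1 a2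
  proof -
    have "((\<lambda>x. (f x - a1 * phi1 x - a2 * phi2 x) / phi2 x) \<longlongrightarrow> 0) F" by (rule smalloD_tendsto[OF o])
    then have "((\<lambda>x. U a1 x - a2) \<longlongrightarrow> 0) F" using tendsto_cong[OF evq] by blast
    then have "((\<lambda>x. (U a1 x - a2) + a2) \<longlongrightarrow> 0 + a2) F" by (intro tendsto_add) auto
    then show ?thesis by simp
  qed
  have Ulim2: "(\<lambda>x. f x - a1 * phi1 x - a2 * phi2 x) \<in> o[F](phi2)" if l: "(U a1 \<longlongrightarrow> a2) F" for a1 a2
  proof (rule smalloI_tendsto)
    have "((\<lambda>x. U a1 x - a2) \<longlongrightarrow> a2 - a2) F" by (intro tendsto_diff l) auto
    then show "((\<lambda>x. (f x - a1 * phi1 x - a2 * phi2 x) / phi2 x) \<longlongrightarrow> 0) F"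
      using tendsto_cong[OF evq] by simp
    show "eventually (\<lambda>x. phi2 x \<noteq> 0) F" using evI by (rule eventually_mono) (use phi2_nz in auto)
  qed
  have intU: "eventually (\<lambda>y. integral {c..y} (H a1) = U a1 y - U a1 c) F" if c: "c \<in> I" for a1 c
    using ge[OF c] by (rule eventually_mono) (use K c in \<open>auto intro: integral_unique\<close>)
  have Heq: "(\<lambda>t. q t * (f1s t - a1)) = H a1" for a1 by (rule ext) (simp add: H_def)
  have II: "((f1s \<longlongrightarrow> a1) FD \<and> imp_conv x0 T (\<lambda>t. q t * (f1s t - a1)))
          \<longleftrightarrow> (\<exists>a2::real. (\<lambda>x. f x - a1 * phi1 x - a2 * phi2 x) \<in> o[F](phi2)
                      \<and> (\<lambda>x. g' x - a1 * q x) \<in> o[FD](q))" for a1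
  proof
    assume A: "(f1s \<longlongrightarrow> a1) FD \<and> imp_conv x0 T (\<lambda>t. q t * (f1s t - a1))"
    then obtain L where L: "((\<lambda>y. integral {T..y} (H a1)) \<longlongrightarrow> L) F"
      unfolding imp_conv_def Heq F_def by blast
    have "((\<lambda>y. U a1 y - U a1 T) \<longlongrightarrow> L) F" using tendsto_cong[OF intU[OF TI]] L by simp
    then have "((\<lambda>y. (U a1 y - U a1 T) + U a1 T) \<longlongrightarrow> L + U a1 T) F" by (intro tendsto_add) auto
    then have "(U a1 \<longlongrightarrow> U a1 T + L) F" by (simp add: add.commute)
    then show "\<exists>a2::real. (\<lambda>x. f x - a1 * phi1 x - a2 * phi2 x) \<in> o[F](phi2)
                      \<and> (\<lambda>x. g' x - a1 * q x) \<in> o[FD](q)"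
      using Ulim2 Ia A by blast
  next
    assume "\<exists>a2::real. (\<lambda>x. f x - a1 * phi1 x - a2 * phi2 x) \<in> o[F](phi2)
                      \<and> (\<lambda>x. g' x - a1 * q x) \<in> o[FD](q)"
    then obtain a2 where o2: "(\<lambda>x. f x - a1 * phi1 x - a2 * phi2 x) \<in> o[F](phi2)"
        and od: "(\<lambda>x. g' x - a1 * q x) \<in> o[FD](q)" by blast
    have Ul: "(U a1 \<longlongrightarrow> a2) F" by (rule Ulim1[OF o2])
    have "((\<lambda>y. U a1 y - U a1 T) \<longlongrightarrow> a2 - U a1 T) F" by (intro tendsto_diff Ul) auto
    then have lim: "((\<lambda>y. integral {T..y} (H a1)) \<longlongrightarrow> a2 - U a1 T) F" using tendsto_cong[OF intU[OF TI]] by simp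
    have intg: "\<forall>y. T \<le> y \<and> ereal y < x0 \<longrightarrow> H a1 integrable_on {T..y}"
    proof (intro allI impI)
      fix y assume "T \<le> y \<and> ereal y < x0"
      then have y: "y \<in> I" "T \<le> y" by (auto simp: I_def ivl_def)
      show "H a1 integrable_on {T..y}" using K[OF TI y(1) y(2)] by blast
    qed
    have "imp_conv x0 T (\<lambda>t. q t * (f1s t - a1))"
      unfolding imp_conv_def Heq using intg lim unfolding F_def by blast
    then show "(f1s \<longlongrightarrow> a1) FD \<and> imp_conv x0 T (\<lambda>t. q t * (f1s t - a1))" using Ia od by blast
  qed
  have III: "\<forall>x\<in>I. f x = a1 * phi1 x + a2 * phi2 x - phi2 x * imp_int x0 x (\<lambda>t. q t * (f1s t - a1))"
    if o2: "(\<lambda>x. f x - a1 * phi1 x - a2 * phi2 x) \<in> o[F](phi2)" for a1 a2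
  proof
    fix x assume x: "x \<in> I"
    have Ul: "(U a1 \<longlongrightarrow> a2) F" by (rule Ulim1[OF o2])
    have "((\<lambda>y. U a1 y - U a1 x) \<longlongrightarrow> a2 - U a1 x) F" by (intro tendsto_diff Ul) auto
    then have lim: "((\<lambda>y. integral {x..y} (H a1)) \<longlongrightarrow> a2 - U a1 x) F" using tendsto_cong[OF intU[OF x]] by simp
    have J: "imp_int x0 x (\<lambda>t. q t * (f1s t - a1)) = a2 - U a1 x"
      unfolding imp_int_def Heq F_def[symmetric] by (rule tendsto_Lim[OF _ lim]) (use Fnb in simp)
    have fx: "f x = a1 * phi1 x + phi2 x * U a1 x" using fU[OF x, of a1] by simp
    show "f x = a1 * phi1 x + a2 * phi2 x - phi2 x * imp_int x0 x (\<lambda>t. q t * (f1s t - a1))"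
      unfolding J using fx by (simp add: algebra_simps)
  qed
  have P1: "\<forall>x\<in>D. ((\<lambda>t. f t / phi2 t) has_real_derivative (q x * f1s x)) (at x within I)"
    using gder by blast
  have P2: "\<forall>a1::real.
          ((f1s \<longlongrightarrow> a1) FD
             \<longleftrightarrow> (\<lambda>x. g' x - a1 * q x) \<in> o[FD](q))
        \<and> ((\<lambda>x. g' x - a1 * q x) \<in> o[FD](q)
             \<longleftrightarrow> ((\<lambda>x. f x - a1 * phi1 x) \<in> o[F](phi1)
                  \<and> (\<lambda>x. g' x - a1 * q x) \<in> o[FD](q)))"
    using Ia Ib by blast
  have P3: "\<forall>a1::real.
          ((f1s \<longlongrightarrow> a1) FD \<and> imp_conv x0 T (\<lambda>t. q t * (f1s t - a1)))
          \<longleftrightarrow> (\<exists>a2::real. (\<lambda>x. f x - a1 * phi1 x - a2 * phi2 x) \<in> o[F](phi2)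
                      \<and> (\<lambda>x. g' x - a1 * q x) \<in> o[FD](q))"
    using II by blast
  have P4: "\<forall>a1 a2::real.
          ((f1s \<longlongrightarrow> a1) FD \<and> imp_conv x0 T (\<lambda>t. q t * (f1s t - a1))
           \<and> (\<lambda>x. f x - a1 * phi1 x - a2 * phi2 x) \<in> o[F](phi2)
           \<and> (\<lambda>x. g' x - a1 * q x) \<in> o[FD](q))
          \<longrightarrow> (\<forall>x\<in>I. f x = a1 * phi1 x + a2 * phi2 x
                         - phi2 x * imp_int x0 x (\<lambda>t. q t * (f1s t - a1)))"
    using III by blast
  show ?thesis using P1 P2 P3 P4 by (intro conjI)
qed

end
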